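(* Let $H$ be a complex Hilbert space, $A\in B(H)$ a nonzero positive semidefinite operator, and let $T\in B_{A^{1/2}}(H)$ be $A$-invertible in $B_{A^{1/2}}(H)$ with an $A$-inverse $S\in B_{A^{1/2}}(H)$. Then $r_A(T)\,r_A(S)\ge 1$.
   Context: $\|x\|_A=\langle Ax,x\rangle^{1/2}$. For $X\in B(H)$, $\|X\|_A=\sup\{\|Xx\|_A : x\in\overline{R(A)},\ \|x\|_A=1\}$. $B_{A^{1/2}}(H)=\{X\in B(H): R(X^*A^{1/2})\subset R(A^{1/2})\}$. $r_A(X)=\lim_{n\to\infty}\|X^n\|_A^{1/n}$. A nonzero $T\in B_{A^{1/2}}(H)$ is $A$-invertible in $B_{A^{1/2}}(H)$ if there is a nonzero $S\in B_{A^{1/2}}(H)$ (an $A$-inverse of $T$) with $ATS=AST=A$. *)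

theory Defs
  imports "HOL-Analysis.Analysis"
begin

class complex_inner = real_inner +
  fixes scaleC :: "complex \<Rightarrow> 'a \<Rightarrow> 'a"
    and cinner :: "'a \<Rightarrow> 'a \<Rightarrow> complex"
  assumes scaleR_scaleC: "scaleR r x = scaleC (complex_of_real r) x"
    and scaleC_add_right: "scaleC a (x + y) = scaleC a x + scaleC a y"
    and scaleC_add_left: "scaleC (a + b) x = scaleC a x + scaleC b x"
    and scaleC_scaleC: "scaleC a (scaleC b x) = scaleC (a * b) x"
    and scaleC_one: "scaleC 1 x = x"
    and cinner_commute: "cinner x y = cnj (cinner y x)"
    and cinner_add_left: "cinner (x + y) z = cinner x z + cinner y z"
    and cinner_scaleC_left: "cinner (scaleC a x) y = cnj a * cinner x y"
    and Re_cinner: "Re (cinner x y) = inner x y"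

class chilbert = complex_inner + complete_space

definition bounded_clinear :: "('a::complex_inner \<Rightarrow> 'a) \<Rightarrow> bool" where
  "bounded_clinear X \<longleftrightarrow> bounded_linear X \<and> (\<forall>c x. X (scaleC c x) = scaleC c (X x))"

definition positive_op :: "('a::complex_inner \<Rightarrow> 'a) \<Rightarrow> bool" where
  "positive_op A \<longleftrightarrow> (\<forall>x. Im (cinner (A x) x) = 0 \<and> Re (cinner (A x) x) \<ge> 0)"

definition adjoint_op :: "('a::complex_inner \<Rightarrow> 'a) \<Rightarrow> ('a \<Rightarrow> 'a)" where
  "adjoint_op X = (THE Y. \<forall>x y. cinner (X x) y = cinner x (Y y))"

definition op_sqrt :: "('a::complex_inner \<Rightarrow> 'a) \<Rightarrow> ('a \<Rightarrow> 'a)" where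
  "op_sqrt A = (THE R. bounded_clinear R \<and> positive_op R \<and> (\<forall>x. R (R x) = A x))"

definition B_half :: "('a::complex_inner \<Rightarrow> 'a) \<Rightarrow> ('a \<Rightarrow> 'a) set" where
  "B_half A = {X. bounded_clinear X \<and>
      range (\<lambda>x. adjoint_op X (op_sqrt A x)) \<subseteq> range (op_sqrt A)}"

definition A_norm :: "('a::complex_inner \<Rightarrow> 'a) \<Rightarrow> 'a \<Rightarrow> real" where
  "A_norm A x = sqrt (Re (cinner (A x) x))"

definition A_opnorm :: "('a::complex_inner \<Rightarrow> 'a) \<Rightarrow> ('a \<Rightarrow> 'a) \<Rightarrow> real" where
  "A_opnorm A X = Sup {A_norm A (X x) | x. x \<in> closure (range A) \<and> A_norm A x = 1}"

definition A_spectral_radius :: "('a::complex_inner \<Rightarrow> 'a) \<Rightarrow> ('a \<Rightarrow> 'a) \<Rightarrow> real" where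
  "A_spectral_radius A X = lim (\<lambda>n. A_opnorm A (X ^^ n) powr (1 / real n))"

definition A_inverse :: "('a::complex_inner \<Rightarrow> 'a) \<Rightarrow> ('a \<Rightarrow> 'a) \<Rightarrow> ('a \<Rightarrow> 'a) \<Rightarrow> bool" where
  "A_inverse A T S \<longleftrightarrow> T \<in> B_half A \<and> S \<in> B_half A \<and> T \<noteq> (\<lambda>x. 0) \<and> S \<noteq> (\<lambda>x. 0) \<and>
     (\<forall>x. A (T (S x)) = A x) \<and> (\<forall>x. A (S (T x)) = A x)"

end

theory Submission
  imports Defs
begin


lemma cinner_add_right: "cinner x (y + z) = cinner x y + cinner x z"
  by (metis cinner_commute cinner_add_left complex_cnj_add)

lemma cinner_scaleC_right: "cinner x (scaleC a y) = a * cinner x y"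
  by (metis cinner_commute cinner_scaleC_left complex_cnj_mult complex_cnj_cnj)

lemma cinner_zero_left[simp]: "cinner 0 y = 0"
  using cinner_add_left[of 0 0 y] by simp

lemma cinner_zero_right[simp]: "cinner x 0 = 0"
  using cinner_add_right[of x 0 0] by simp

lemma cinner_minus_left: "cinner (- x) y = - cinner x y"
proof -
  have h: "cinner x y + cinner (-x) y = 0" using cinner_add_left[of x "-x" y] by simp
  have "cinner (-x) y = (cinner x y + cinner (-x) y) - cinner x y" by simp
  with h show ?thesis by simp
qed

lemma cinner_minus_right: "cinner x (- y) = - cinner x y"
proof -
  have h: "cinner x y + cinner x (-y) = 0" using cinner_add_right[of x y "-y"] by simp
  have "cinner x (-y) = (cinner x y + cinner x (-y)) - cinner x y" by simp
  with h show ?thesis by simp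
qed

lemma cinner_diff_left: "cinner (x - y) z = cinner x z - cinner y z"
  using cinner_add_left[of x "-y" z] cinner_minus_left[of y z] by simp

lemma cinner_diff_right: "cinner x (y - z) = cinner x y - cinner x z"
  using cinner_add_right[of x y "-z"] cinner_minus_right[of x z] by simp

lemma Im_cinner_self: "Im (cinner x x) = 0"
  using cinner_commute[of x x] by (metis cnj.simps(2) neg_equal_zero)

lemma cinner_self: "cinner x x = complex_of_real (inner x x)"
  using Im_cinner_self[of x] Re_cinner[of x x] by (simp add: complex_eq_iff)

lemma cinner_self_norm: "cinner x x = complex_of_real ((norm x)^2)"
  by (simp add: cinner_self power2_norm_eq_inner)

lemma scaleC_zero_right[simp]: "scaleC a 0 = 0"
  using scaleC_add_right[of a 0 0] by simp

lemma scaleC_zero_left[simp]: "scaleC 0 x = 0"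
  using scaleC_add_left[of 0 0 x] by simp

lemma scaleC_minus_right: "scaleC a (- x) = - scaleC a x"
  using scaleC_add_right[of a x "-x"] by (simp add: eq_neg_iff_add_eq_0 add.commute)

lemma scaleC_diff_right: "scaleC a (x - y) = scaleC a x - scaleC a y"
  using scaleC_add_right[of a x "-y"] scaleC_minus_right[of a y] by simp

lemma scaleC_minus_left: "scaleC (- a) x = - scaleC a x"
  using scaleC_add_left[of a "-a" x] by (simp add: eq_neg_iff_add_eq_0 add.commute)

lemma scaleC_diff_left: "scaleC (a - b) x = scaleC a x - scaleC b x"
  using scaleC_add_left[of a "-b" x] scaleC_minus_left[of b x] by simp

lemma scaleC_of_real: "scaleC (complex_of_real r) x = scaleR r x"
  by (simp add: scaleR_scaleC)

lemma Im_cinner: "Im (cinner x y) = inner (scaleC \<i> x) y"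
proof -
  have "inner (scaleC \<i> x) y = Re (cinner (scaleC \<i> x) y)" by (simp add: Re_cinner)
  also have "\<dots> = Re (- \<i> * cinner x y)" by (simp add: cinner_scaleC_left)
  also have "\<dots> = Im (cinner x y)" by simp
  finally show ?thesis by simp
qed

lemma cnj_mult_self: "cnj c * c = complex_of_real ((cmod c)^2)"
  by (metis complex_norm_square mult.commute)

lemma norm_scaleC: "norm (scaleC c x) = cmod c * norm x"
proof -
  have "cinner (scaleC c x) (scaleC c x) = (cnj c * c) * cinner x x"
    by (simp add: cinner_scaleC_left cinner_scaleC_right mult.assoc)
  also have "\<dots> = complex_of_real ((cmod c)^2 * inner x x)"
    by (simp add: cnj_mult_self cinner_self)
  finally have "inner (scaleC c x) (scaleC c x) = (cmod c)^2 * inner x x"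
    by (metis Re_cinner Re_complex_of_real)
  then show ?thesis
    by (simp add: norm_eq_sqrt_inner real_sqrt_mult)
qed

lemma cinner_cauchy_schwarz: "cmod (cinner x y) \<le> norm x * norm y"
proof (cases "cinner x y = 0")
  case True then show ?thesis by simp
next
  case False
  let ?z = "cinner x y"
  define a where "a = ?z / complex_of_real (cmod ?z)"
  have nz: "cmod ?z \<noteq> 0" using False by simp
  have ca: "cmod a = 1" using False by (simp add: a_def norm_divide)
  have "cnj a * ?z = (cnj ?z * ?z) / complex_of_real (cmod ?z)"
    by (simp add: a_def)
  also have "\<dots> = complex_of_real ((cmod ?z)^2 / cmod ?z)"
    by (simp add: cnj_mult_self)
  also have "\<dots> = complex_of_real (cmod ?z)"
    using nz by (simp add: power2_eq_square)
  finally have "cnj a * ?z = complex_of_real (cmod ?z)" .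
  then have "cmod ?z = Re (cinner (scaleC a x) y)"
    by (simp add: cinner_scaleC_left)
  also have "\<dots> = inner (scaleC a x) y" by (simp add: Re_cinner)
  also have "\<dots> \<le> norm (scaleC a x) * norm y" by (rule norm_cauchy_schwarz)
  also have "\<dots> = norm x * norm y" by (simp add: norm_scaleC ca)
  finally show ?thesis .
qed

lemma bounded_linear_scaleC: "bounded_linear (scaleC c)"
proof -
  have 1: "\<And>x y. scaleC c (x + y) = scaleC c x + scaleC c y" by (rule scaleC_add_right)
  have 2: "\<And>r x. scaleC c (scaleR r x) = scaleR r (scaleC c x)"
    unfolding scaleR_scaleC scaleC_scaleC by (simp add: mult.commute)
  have 3: "\<And>x. norm (scaleC c x) \<le> norm x * cmod c"
    by (simp add: norm_scaleC mult.commute)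
  show ?thesis by (rule bounded_linear_intro[OF 1 2 3])
qed

lemma cinner_ext: "(\<And>z. cinner x z = cinner y z) \<Longrightarrow> x = y"
proof -
  assume h: "\<And>z. cinner x z = cinner y z"
  have "cinner (x - y) (x - y) = 0" using h by (simp add: cinner_diff_left)
  then show "x = y" by (simp add: cinner_self_norm)
qed

lemma cinner_ext_right: "(\<And>z. cinner z x = cinner z y) \<Longrightarrow> x = y"
  by (rule cinner_ext) (metis cinner_commute)


lemma parallelogram_law:
  fixes a b :: "'a::real_inner"
  shows "(norm (a+b))^2 + (norm (a-b))^2 = 2*(norm a)^2 + 2*(norm b)^2"
  by (simp add: power2_norm_eq_inner inner_add_left inner_add_right inner_diff_left
      inner_diff_right inner_commute algebra_simps)

lemma proj_exists:
  fixes u :: "'a::{real_inner,complete_space}" and M :: "'a set"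
  assumes cl: "closed M" and sub: "subspace M"
  shows "\<exists>p\<in>M. \<forall>m\<in>M. inner (u - p) m = 0"
proof -
  have M0: "0 \<in> M" using sub by (rule subspace_0)
  define d where "d = infdist u M"
  have d_le: "d \<le> norm (u - m)" if "m \<in> M" for m
    using infdist_le[OF that, of u] by (simp add: d_def dist_norm)
  have d0: "0 \<le> d" by (simp add: d_def infdist_nonneg)
  define e where "e = (\<lambda>n::nat. inverse (real (Suc n)))"
  have e_pos: "0 < e n" for n by (simp add: e_def)
  have e_le1: "e n \<le> 1" for n by (simp add: e_def inverse_le_1_iff)
  have "\<exists>m\<in>M. norm (u - m) < d + e n" for n
  proof -
    have bdd: "bdd_below ((\<lambda>a. dist u a) ` M)"
      by (rule bdd_belowI[of _ 0]) auto
    have "(INF a\<in>M. dist u a) < d + e n"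
    proof -
      have "infdist u M = (INF a\<in>M. dist u a)" using M0 by (intro infdist_notempty) auto
      then show ?thesis using e_pos[of n] by (simp add: d_def)
    qed
    then obtain a where "a \<in> M" "dist u a < d + e n"
      using cINF_less_iff[OF _ bdd] M0 by blast
    then show ?thesis by (auto simp: dist_norm)
  qed
  then obtain s where s: "\<And>n. s n \<in> M" "\<And>n. norm (u - s n) < d + e n"
    by metis
  have key: "(norm (s j - s k))^2 \<le> 2*(2*d+1)*(e j + e k)" for j k
  proof -
    let ?a = "u - s j" and ?b = "u - s k"
    have mid: "(1/2) *\<^sub>R (s j + s k) \<in> M"
      using s(1) sub by (simp add: subspace_add subspace_scale)
    have "?a + ?b = 2 *\<^sub>R (u - (1/2) *\<^sub>R (s j + s k))"
      by (simp add: algebra_simps scaleR_2)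
    then have nab: "norm (?a + ?b) = 2 * norm (u - (1/2) *\<^sub>R (s j + s k))" by simp
    have "2*d \<le> norm (?a + ?b)" using d_le[OF mid] nab by simp
    then have sq1: "(2*d)^2 \<le> (norm (?a + ?b))^2"
      using d0 by (intro power_mono) auto
    have sa: "(norm ?a)^2 \<le> (d + e j)^2"
      using s(2)[of j] by (intro power_mono) auto
    have sb: "(norm ?b)^2 \<le> (d + e k)^2"
      using s(2)[of k] by (intro power_mono) auto
    have "?a - ?b = s k - s j" by simp
    then have "(norm (s j - s k))^2 = 2*(norm ?a)^2 + 2*(norm ?b)^2 - (norm (?a + ?b))^2"
      using parallelogram_law[of ?a ?b] by (simp add: norm_minus_commute)
    also have "\<dots> \<le> 2*(d + e j)^2 + 2*(d + e k)^2 - (2*d)^2"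
      using sa sb sq1 by linarith
    also have "\<dots> = 4*d*e j + 2*(e j)^2 + 4*d*e k + 2*(e k)^2"
      by (simp add: power2_eq_square algebra_simps)
    also have "\<dots> \<le> 4*d*e j + 2*e j + 4*d*e k + 2*e k"
    proof -
      have "(e j)^2 \<le> e j" using e_pos[of j] e_le1[of j] by (simp add: power2_eq_square mult_le_cancel_left1)
      moreover have "(e k)^2 \<le> e k" using e_pos[of k] e_le1[of k] by (simp add: power2_eq_square mult_le_cancel_left1)
      ultimately show ?thesis by linarith
    qed
    also have "\<dots> = 2*(2*d+1)*(e j + e k)" by (simp add: algebra_simps)
    finally show ?thesis .
  qed
  have cauchy: "Cauchy s"
  proof (rule metric_CauchyI)
    fix \<epsilon> :: real assume ep: "0 < \<epsilon>"
    obtain N :: nat where N: "4*(2*d+1) / \<epsilon>^2 < real N"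
      using reals_Archimedean2 by blast
    have eN: "4*(2*d+1) * e N < \<epsilon>^2"
    proof -
      have "4*(2*d+1) < \<epsilon>^2 * real (Suc N)"
      proof -
        have "4*(2*d+1) < real N * \<epsilon>^2" using N ep by (simp add: divide_less_eq mult.commute)
        moreover have "real N * \<epsilon>^2 \<le> \<epsilon>^2 * real (Suc N)" using ep by (simp add: algebra_simps)
        ultimately show ?thesis by linarith
      qed
      then show ?thesis using ep by (simp add: e_def field_simps)
    qed
    show "\<exists>M. \<forall>m\<ge>M. \<forall>n\<ge>M. dist (s m) (s n) < \<epsilon>"
    proof (intro exI allI impI)
      fix m n assume mn: "N \<le> m" "N \<le> n"
      have em: "e m \<le> e N" "e n \<le> e N" using mn by (auto simp: e_def intro!: le_imp_inverse_le)
      have "(norm (s m - s n))^2 \<le> 2*(2*d+1)*(e m + e n)" by (rule key)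
      also have "\<dots> \<le> 2*(2*d+1)*(2 * e N)"
        using em d0 by (intro mult_left_mono) auto
      also have "\<dots> < \<epsilon>^2" using eN by (simp add: algebra_simps)
      finally have "(norm (s m - s n))^2 < \<epsilon>^2" .
      then have "norm (s m - s n) < \<epsilon>"
        using ep by (simp add: power_less_imp_less_base)
      then show "dist (s m) (s n) < \<epsilon>" by (simp add: dist_norm)
    qed
  qed
  then obtain p where lim: "s \<longlonglongrightarrow> p"
    using Cauchy_convergent_iff convergent_def by blast
  have pM: "p \<in> M"
    using closed_sequentially[OF cl] s(1) lim by blast
  have minim: "norm (u - p) \<le> norm (u - m)" if mM: "m \<in> M" for m
  proof (rule LIMSEQ_le)
    show "(\<lambda>n. norm (u - s n)) \<longlonglongrightarrow> norm (u - p)"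
      by (intro tendsto_intros lim)
    show "(\<lambda>n. norm (u - m) + e n) \<longlonglongrightarrow> norm (u - m)"
      using tendsto_add[OF tendsto_const LIMSEQ_inverse_real_of_nat, of "norm (u - m)"]
      by (simp add: e_def)
    show "\<exists>N. \<forall>n\<ge>N. norm (u - s n) \<le> norm (u - m) + e n"
    proof (intro exI allI impI)
      fix n :: nat
      show "norm (u - s n) \<le> norm (u - m) + e n" using s(2)[of n] d_le[OF mM] by linarith
    qed
  qed
  have "inner (u - p) m = 0" if mM: "m \<in> M" for m
  proof (cases "m = 0")
    case True then show ?thesis by simp
  next
    case False
    let ?a = "inner (u - p) m" and ?s = "inner m m"
    have spos: "0 < ?s" using False by simp
    define t where "t = ?a / ?s"
    have "p + t *\<^sub>R m \<in> M" using pM mM sub by (simp add: subspace_add subspace_scale)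
    then have "norm (u - p) \<le> norm (u - (p + t *\<^sub>R m))" by (rule minim)
    then have "(norm (u - p))^2 \<le> (norm ((u - p) - t *\<^sub>R m))^2"
      by (simp add: diff_diff_eq power_mono)
    also have "\<dots> = (norm (u - p))^2 - 2 * t * ?a + t^2 * ?s"
      by (simp only: power2_norm_eq_inner)
         (simp add: inner_diff_left inner_diff_right inner_commute power2_eq_square algebra_simps)
    finally have "2 * t * ?a \<le> t^2 * ?s" by simp
    then have "2 * ?a^2 / ?s \<le> ?a^2 / ?s"
      using spos by (simp add: t_def power2_eq_square field_simps)
    then have "?a^2 \<le> 0" using spos by (simp add: divide_le_cancel)
    then show ?thesis by simp
  qed
  with pM show ?thesis by blast
qed

lemma proj_exists_c:
  fixes u :: "'a::chilbert" and M :: "'a set"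
  assumes cl: "closed M" and sub: "subspace M" and cc: "\<And>c x. x \<in> M \<Longrightarrow> scaleC c x \<in> M"
  shows "\<exists>p\<in>M. \<forall>m\<in>M. cinner (u - p) m = 0"
proof -
  obtain p where pM: "p \<in> M" and orth: "\<And>m. m \<in> M \<Longrightarrow> inner (u - p) m = 0"
    using proj_exists[OF cl sub, of u] by blast
  have "cinner (u - p) m = 0" if mM: "m \<in> M" for m
  proof -
    have re: "Re (cinner (u - p) m) = 0" using orth[OF mM] by (simp add: Re_cinner)
    have "Re (cinner (u - p) (scaleC \<i> m)) = 0" using orth[OF cc[OF mM]] by (simp add: Re_cinner)
    then have im: "Im (cinner (u - p) m) = 0" by (simp add: cinner_scaleC_right)
    show ?thesis using re im by (simp add: complex_eq_iff)
  qed
  with pM show ?thesis by blast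
qed

lemma bounded_linear_cinner_right: "bounded_linear (\<lambda>x::'a::complex_inner. cinner y x)"
proof -
  have 1: "\<And>a b. cinner y (a + b) = cinner y a + cinner y b" by (rule cinner_add_right)
  have 2: "\<And>r a. cinner y (scaleR r a) = scaleR r (cinner y a)"
    by (simp add: scaleR_scaleC cinner_scaleC_right scaleR_conv_of_real)
  have 3: "\<And>a. norm (cinner y a) \<le> norm a * norm y"
    using cinner_cauchy_schwarz by (metis mult.commute)
  show ?thesis by (rule bounded_linear_intro[OF 1 2 3])
qed

lemma riesz:
  fixes f :: "'a::chilbert \<Rightarrow> complex"
  assumes bl: "bounded_linear f" and cl: "\<And>c x. f (scaleC c x) = c * f x"
  shows "\<exists>z. \<forall>x. f x = cinner z x"
proof (cases "\<forall>x. f x = 0")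
  case True then show ?thesis by (intro exI[of _ 0]) simp
next
  case False
  then obtain x0 where x0: "f x0 \<noteq> 0" by blast
  interpret f: bounded_linear f by (rule bl)
  let ?K = "{x. f x = 0}"
  have clK: "closed ?K"
    by (intro closed_Collect_eq continuous_intros linear_continuous_on bl)
  have subK: "subspace ?K"
    unfolding subspace_def by (simp add: f.add f.scaleR)
  have ccK: "\<And>c x. x \<in> ?K \<Longrightarrow> scaleC c x \<in> ?K" by (simp add: cl)
  obtain p where pK: "p \<in> ?K" and orth: "\<And>m. m \<in> ?K \<Longrightarrow> cinner (x0 - p) m = 0"
    using proj_exists_c[OF clK subK ccK, of x0] by blast
  define w where "w = x0 - p"
  have fw: "f w = f x0" using pK by (simp add: w_def f.diff)
  have wne: "cinner w w \<noteq> 0" using fw x0 by (auto simp: cinner_self_norm)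
  define z where "z = scaleC (cnj (f w / cinner w w)) w"
  have "f x = cinner z x" for x
  proof -
    let ?v = "scaleC (f x) w - scaleC (f w) x"
    have "f ?v = 0" by (simp add: f.diff cl mult.commute)
    then have "cinner w ?v = 0" using orth by (simp add: w_def)
    then have "f x * cinner w w = f w * cinner w x"
      by (simp add: cinner_diff_right cinner_scaleC_right)
    then have "f x = f w / cinner w w * cinner w x"
      using wne by (simp add: field_simps)
    then show ?thesis by (simp add: z_def cinner_scaleC_left)
  qed
  then show ?thesis by blast
qed

lemma bounded_clinear_scaleC: "bounded_clinear X \<Longrightarrow> X (scaleC c x) = scaleC c (X x)"
  by (simp add: bounded_clinear_def)

lemma bounded_clinear_bl: "bounded_clinear X \<Longrightarrow> bounded_linear X"
  by (simp add: bounded_clinear_def)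

lemma adjoint_exists:
  fixes X :: "'a::chilbert \<Rightarrow> 'a"
  assumes "bounded_clinear X"
  shows "\<exists>Y. \<forall>x y. cinner (X x) y = cinner x (Y y)"
proof -
  have "\<exists>z. \<forall>x. cinner (X x) y = cinner x z" for y
  proof -
    have bl: "bounded_linear (\<lambda>x. cinner y (X x))"
      using bounded_linear_compose[OF bounded_linear_cinner_right bounded_clinear_bl[OF assms]] .
    have cl: "cinner y (X (scaleC c x)) = c * cinner y (X x)" for c x
      using assms by (simp add: bounded_clinear_scaleC cinner_scaleC_right)
    obtain z where z: "\<And>x. cinner y (X x) = cinner z x" using riesz[OF bl cl] by blast
    have "cinner (X x) y = cinner x z" for x
      using z[of x] by (metis cinner_commute)
    then show ?thesis by blast
  qed
  then show ?thesis by metis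
qed

lemma adjoint_op_eq:
  fixes X :: "'a::chilbert \<Rightarrow> 'a"
  assumes "bounded_clinear X"
  shows "cinner (X x) y = cinner x (adjoint_op X y)"
proof -
  obtain Y where Y: "\<forall>x y. cinner (X x) y = cinner x (Y y)" using adjoint_exists[OF assms] by blast
  have "adjoint_op X = Y"
    unfolding adjoint_op_def
  proof (rule the_equality)
    show "\<forall>x y. cinner (X x) y = cinner x (Y y)" by (rule Y)
    fix Y' assume Y': "\<forall>x y. cinner (X x) y = cinner x (Y' y)"
    show "Y' = Y"
    proof
      fix y show "Y' y = Y y" by (rule cinner_ext_right) (metis Y Y')
    qed
  qed
  then show ?thesis using Y by simp
qed


lemma bclin_add: "bounded_clinear A \<Longrightarrow> A (x + y) = A x + A y"
  by (simp add: bounded_clinear_def linear_add bounded_linear.linear)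

lemma bclin_diff: "bounded_clinear A \<Longrightarrow> A (x - y) = A x - A y"
  by (simp add: bounded_clinear_def linear_diff bounded_linear.linear)

lemma bclin_scaleR: "bounded_clinear A \<Longrightarrow> A (scaleR r x) = scaleR r (A x)"
  by (simp add: bounded_clinear_def linear_scale bounded_linear.linear)

lemma bclin_zero: "bounded_clinear A \<Longrightarrow> A 0 = 0"
  by (simp add: bounded_clinear_def linear_0 bounded_linear.linear)

lemma bclin_minus: "bounded_clinear A \<Longrightarrow> A (- x) = - A x"
  by (simp add: bounded_clinear_def linear_neg bounded_linear.linear)

lemma positive_herm:
  fixes A :: "'a::complex_inner \<Rightarrow> 'a"
  assumes bc: "bounded_clinear A" and pos: "positive_op A"
  shows "cinner (A x) y = cinner x (A y)"
proof -
  have im: "\<And>u. Im (cinner (A u) u) = 0" using pos by (simp add: positive_op_def)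
  have e1: "cinner (A (x + y)) (x + y) = cinner (A x) x + cinner (A x) y + cinner (A y) x + cinner (A y) y"
    by (simp add: bclin_add[OF bc] cinner_add_left cinner_add_right)
  have e2: "cinner (A (x + scaleC \<i> y)) (x + scaleC \<i> y)
      = cinner (A x) x + \<i> * cinner (A x) y - \<i> * cinner (A y) x + cinner (A y) y"
    by (simp add: bclin_add[OF bc] bounded_clinear_scaleC[OF bc] cinner_add_left cinner_add_right
        cinner_scaleC_left cinner_scaleC_right algebra_simps)
  have i1: "Im (cinner (A x) y) + Im (cinner (A y) x) = 0"
    using im[of "x + y"] im[of x] im[of y] by (simp add: e1)
  have i2: "Re (cinner (A x) y) - Re (cinner (A y) x) = 0"
    using im[of "x + scaleC \<i> y"] im[of x] im[of y] by (simp add: e2)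
  have "cinner (A x) y = cnj (cinner (A y) x)"
    using i1 i2 by (simp add: complex_eq_iff)
  then show ?thesis by (metis cinner_commute)
qed

lemma quad_nonneg:
  fixes a b c :: real
  assumes c: "0 \<le> c" and q: "\<And>t. 0 \<le> a + 2*t*b + t^2*c"
  shows "b^2 \<le> a*c"
proof (cases "c = 0")
  case True
  have "b = 0"
  proof (rule ccontr)
    assume b: "b \<noteq> 0"
    have "0 \<le> a + 2*(-(\<bar>a\<bar>+1)/(2*b))*b" using q[of "-(\<bar>a\<bar>+1)/(2*b)"] True by simp
    also have "\<dots> = a - (\<bar>a\<bar>+1)" using b by (simp add: field_simps)
    finally show False by linarith
  qed
  then show ?thesis using True by simp
next
  case False
  then have cp: "0 < c" using c by simp
  have "0 \<le> a + 2*(-b/c)*b + (-b/c)^2*c" by (rule q)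
  also have "\<dots> = a - b^2/c" using cp by (simp add: field_simps power2_eq_square)
  finally have "b^2/c \<le> a" by linarith
  then show ?thesis using pos_divide_le_eq[OF cp] by blast
qed

lemma positive_inner_nonneg: "positive_op A \<Longrightarrow> 0 \<le> inner (A x) x"
  by (simp add: positive_op_def Re_cinner[symmetric])

lemma positive_cs:
  fixes A :: "'a::complex_inner \<Rightarrow> 'a"
  assumes bc: "bounded_clinear A" and pos: "positive_op A"
  shows "(inner (A x) y)^2 \<le> inner (A x) x * inner (A y) y"
proof -
  have sym: "inner (A u) v = inner (A v) u" for u v
  proof -
    have "inner (A u) v = Re (cinner (A u) v)" by (simp add: Re_cinner)
    also have "\<dots> = Re (cinner u (A v))" by (simp add: positive_herm[OF bc pos])
    also have "\<dots> = inner (A v) u" by (simp add: Re_cinner inner_commute)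
    finally show ?thesis .
  qed
  have "0 \<le> inner (A x) x + 2*t*inner (A x) y + t^2 * inner (A y) y" for t
  proof -
    have "0 \<le> inner (A (x + t *\<^sub>R y)) (x + t *\<^sub>R y)" by (rule positive_inner_nonneg[OF pos])
    also have "\<dots> = inner (A x) x + t * inner (A x) y + t * inner (A y) x + t^2 * inner (A y) y"
      by (simp add: bclin_add[OF bc] bclin_scaleR[OF bc] inner_add_left inner_add_right
          power2_eq_square algebra_simps)
    finally show ?thesis using sym[of y x] by simp
  qed
  then show ?thesis
    by (intro quad_nonneg positive_inner_nonneg[OF pos])
qed

lemma positive_zero:
  fixes A :: "'a::complex_inner \<Rightarrow> 'a"
  assumes bc: "bounded_clinear A" and pos: "positive_op A" and z: "inner (A y) y = 0"
  shows "A y = 0"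
proof -
  have "(inner (A y) (A y))^2 \<le> inner (A y) y * inner (A (A y)) (A y)"
    by (rule positive_cs[OF bc pos])
  then have "(inner (A y) (A y))^2 \<le> 0" using z by simp
  then have "(inner (A y) (A y))^2 = 0" using zero_le_power2[of "inner (A y) (A y)"] by (rule antisym)
  then show ?thesis by simp
qed

lemma positive_contr:
  fixes A :: "'a::complex_inner \<Rightarrow> 'a"
  assumes bc: "bounded_clinear A" and pos: "positive_op A"
    and le: "\<And>x. inner (A x) x \<le> (norm x)^2"
  shows "norm (A x) \<le> norm x"
proof (cases "A x = 0")
  case True then show ?thesis by simp
next
  case False
  have "(inner (A x) (A x))^2 \<le> inner (A x) x * inner (A (A x)) (A x)"
    by (rule positive_cs[OF bc pos])
  also have "\<dots> \<le> (norm x)^2 * (norm (A x))^2"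
    using mult_mono[OF le[of x] le[of "A x"]] positive_inner_nonneg[OF pos, of "A x"]
    by simp
  finally have "((norm (A x))^2)^2 \<le> (norm x)^2 * (norm (A x))^2"
    by (simp only: power2_norm_eq_inner)
  moreover have "0 < (norm (A x))^2" using False by simp
  ultimately have "(norm (A x))^2 \<le> (norm x)^2"
    using mult_right_le_imp_le[of "(norm (A x))^2" "(norm (A x))^2" "(norm x)^2"]
    by (simp only: power2_eq_square[of "(norm (A x))^2"])
  then show ?thesis by (rule power2_le_imp_le) simp
qed

lemma bounded_clinear_funpow:
  assumes "bounded_clinear B"
  shows "bounded_clinear (B ^^ k)"
proof (induction k)
  case 0
  show ?case by (simp add: bounded_clinear_def bounded_linear_ident id_def)
next
  case (Suc k)
  then show ?case using assms
    by (auto simp: bounded_clinear_def intro: bounded_linear_compose)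
qed

lemma herm_funpow:
  fixes B :: "'a::complex_inner \<Rightarrow> 'a"
  assumes h: "\<And>x y. cinner (B x) y = cinner x (B y)"
  shows "cinner ((B ^^ k) x) y = cinner x ((B ^^ k) y)"
proof (induction k arbitrary: y)
  case 0 then show ?case by simp
next
  case (Suc k)
  have "cinner ((B ^^ Suc k) x) y = cinner ((B ^^ k) x) (B y)" by (simp add: h)
  also have "\<dots> = cinner x ((B ^^ k) (B y))" by (rule Suc)
  also have "\<dots> = cinner x ((B ^^ Suc k) y)" by (simp add: funpow_swap1)
  finally show ?case .
qed

lemma contr_funpow:
  fixes B :: "'a::real_normed_vector \<Rightarrow> 'a"
  assumes "\<And>x. norm (B x) \<le> norm x"
  shows "norm ((B ^^ k) x) \<le> norm x"
proof (induction k)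
  case 0 then show ?case by simp
next
  case (Suc k)
  have "norm ((B ^^ Suc k) x) = norm (B ((B ^^ k) x))" by simp
  also have "\<dots> \<le> norm ((B ^^ k) x)" by (rule assms)
  finally show ?case using Suc by linarith
qed

lemma funpow_add_apply: "(B ^^ (j + k)) x = (B ^^ j) ((B ^^ k) x)"
  by (simp add: funpow_add)


function sqc :: "nat \<Rightarrow> real" where
  "sqc n = (if n = 0 then 0 else if n = 1 then 1/2
            else (\<Sum>j\<in>{1..<n}. sqc j * sqc (n - j)) / 2)"
  by pat_completeness auto
termination by (relation "Wellfounded.measure id") auto

declare sqc.simps[simp del]

lemma sqc_0[simp]: "sqc 0 = 0" by (simp add: sqc.simps)
lemma sqc_1[simp]: "sqc 1 = 1/2" by (simp add: sqc.simps)
lemma sqc_Suc0[simp]: "sqc (Suc 0) = 1/2" by (simp add: sqc.simps)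
lemma sqc_rec: "2 \<le> n \<Longrightarrow> sqc n = (\<Sum>j\<in>{1..<n}. sqc j * sqc (n - j)) / 2"
  by (subst sqc.simps) simp

lemma sqc_nonneg: "0 \<le> sqc n"
proof (induction n rule: less_induct)
  case (less n)
  show ?case
  proof (cases "n \<le> 1")
    case True then show ?thesis by (cases n) auto
  next
    case False
    have "0 \<le> (\<Sum>j\<in>{1..<n}. sqc j * sqc (n - j))"
      by (intro sum_nonneg mult_nonneg_nonneg less.IH) auto
    then show ?thesis using False by (simp add: sqc_rec)
  qed
qed

definition sqd :: "nat \<Rightarrow> real" where
  "sqd n = (\<Sum>i\<le>n. sqc i * sqc (n - i))"

lemma sqd_eq: "sqd n = 2 * sqc n - (if n = 1 then 1 else 0)"
proof (cases "n \<le> 1")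
  case True
  then consider "n = 0" | "n = 1" by linarith
  then show ?thesis by cases (simp_all add: sqd_def)
next
  case False
  have "sqd n = (\<Sum>i\<in>{1..<n}. sqc i * sqc (n - i))"
    unfolding sqd_def
  proof (rule sum.mono_neutral_right)
    show "finite {..n}" by simp
    show "{1..<n} \<subseteq> {..n}" by auto
    show "\<forall>i\<in>{..n} - {1..<n}. sqc i * sqc (n - i) = 0"
    proof
      fix i assume "i \<in> {..n} - {1..<n}"
      then have "i = 0 \<or> i = n" by auto
      then show "sqc i * sqc (n - i) = 0" by auto
    qed
  qed
  also have "\<dots> = 2 * sqc n" using False by (simp add: sqc_rec)
  finally show ?thesis using False by simp
qed

lemma sqc_partial_le: "(\<Sum>k<N. sqc k) \<le> 1"
proof (induction N rule: less_induct)
  case (less N)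
  show ?case
  proof (cases "N \<le> 1")
    case True
    then consider "N = 0" | "N = 1" by linarith
    then show ?thesis by cases simp_all
  next
    case False
    let ?s = "\<Sum>k<N - 1. sqc k"
    have s0: "0 \<le> ?s" by (intro sum_nonneg sqc_nonneg)
    have s1: "?s \<le> 1" using less.IH False by simp
    have "(\<Sum>k<N. sqc k) = (\<Sum>k<N. (sqd k + (if k = 1 then 1 else 0)) / 2)"
      by (simp add: sqd_eq)
    also have "\<dots> = ((\<Sum>k<N. sqd k) + (\<Sum>k<N. (if k = 1 then 1 else 0))) / 2"
      by (simp only: sum.distrib[symmetric] sum_divide_distrib)
    also have "(\<Sum>k<N. (if k = 1 then 1 else (0::real))) = 1"
      using False by (simp add: sum.delta)
    also have "(\<Sum>k<N. sqd k) = (\<Sum>(i,j)\<in>{(i,j). i+j < N}. sqc i * sqc j)"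
      unfolding sqd_def by (rule sum.triangle_reindex[symmetric])
    also have "\<dots> \<le> (\<Sum>(i,j)\<in>{..<N-1} \<times> {..<N-1}. sqc i * sqc j)"
    proof -
      have fin: "finite {(i,j). i+j < (N::nat)}"
        by (rule finite_subset[of _ "{..<N} \<times> {..<N}"]) auto
      have eq: "(\<Sum>(i,j)\<in>{(i,j). i+j < N} \<inter> ({..<N-1} \<times> {..<N-1}). sqc i * sqc j)
          = (\<Sum>(i,j)\<in>{(i,j). i+j < N}. sqc i * sqc j)"
      proof (rule sum.mono_neutral_left)
        show "finite {(i,j). i+j < N}" by (rule fin)
        show "{(i,j). i+j < N} \<inter> ({..<N-1} \<times> {..<N-1}) \<subseteq> {(i,j). i+j < N}" by auto
        show "\<forall>p\<in>{(i,j). i+j < N} - {(i,j). i+j < N} \<inter> ({..<N-1} \<times> {..<N-1}).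
              (case p of (i,j) \<Rightarrow> sqc i * sqc j) = 0"
        proof
          fix p assume p: "p \<in> {(i,j). i+j < N} - {(i,j). i+j < N} \<inter> ({..<N-1} \<times> {..<N-1})"
          obtain i j where pij: "p = (i,j)" by (cases p)
          then have "i = 0 \<or> j = 0" using p by auto
          then show "(case p of (i,j) \<Rightarrow> sqc i * sqc j) = 0" using pij by auto
        qed
      qed
      have "(\<Sum>(i,j)\<in>{(i,j). i+j < N}. sqc i * sqc j)
          = (\<Sum>(i,j)\<in>{(i,j). i+j < N} \<inter> ({..<N-1} \<times> {..<N-1}). sqc i * sqc j)"
        using eq by simp
      also have "\<dots> \<le> (\<Sum>(i,j)\<in>{..<N-1} \<times> {..<N-1}. sqc i * sqc j)"
        by (rule sum_mono2) (auto intro: mult_nonneg_nonneg sqc_nonneg)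
      finally show ?thesis .
    qed
    also have "(\<Sum>(i,j)\<in>{..<N-1} \<times> {..<N-1}. sqc i * sqc j) = ?s * ?s"
      by (simp add: sum_product sum.cartesian_product)
    finally have "(\<Sum>k<N. sqc k) \<le> (?s * ?s + 1) / 2" by simp
    also have "\<dots> \<le> 1" using s0 s1 mult_le_one[OF s1 s0 s1] by simp
    finally show ?thesis .
  qed
qed

lemma sqc_summable: "summable sqc"
  by (rule summableI_nonneg_bounded[OF sqc_nonneg sqc_partial_le])

lemma sqc_suminf_le: "suminf sqc \<le> 1"
  by (rule suminf_le_const[OF sqc_summable sqc_partial_le])


lemma op_cauchy:
  fixes F :: "nat \<Rightarrow> 'a::banach \<Rightarrow> 'a" and a :: "nat \<Rightarrow> real"
  assumes bl: "\<And>k. bounded_linear (F k)"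
    and nrm: "\<And>k y. norm (F k y) \<le> norm y"
    and comp: "\<And>j k y. F j (F k y) = F (j + k) y"
    and a0: "\<And>k. 0 \<le> a k" and sa: "summable a"
  shows "(\<lambda>n. (\<Sum>i\<le>n. a i * a (n - i)) *\<^sub>R F n x) sums (\<Sum>j. a j *\<^sub>R F j (\<Sum>k. a k *\<^sub>R F k x))"
proof -
  have summ: "summable (\<lambda>k. a k *\<^sub>R F k y)" for y
  proof (rule summable_comparison_test)
    show "\<exists>N. \<forall>n\<ge>N. norm (a n *\<^sub>R F n y) \<le> a n * norm y"
      using a0 nrm by (auto intro!: mult_left_mono)
    show "summable (\<lambda>n. a n * norm y)" using sa by (rule summable_mult2)
  qed
  define S where "S = (\<Sum>k. a k *\<^sub>R F k x)"
  define T where "T = (\<Sum>j. a j *\<^sub>R F j S)"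
  define SN where "SN = (\<lambda>N. \<Sum>j<N. a j *\<^sub>R F j x)"
  define U where "U = (\<lambda>N y. \<Sum>i<N. a i *\<^sub>R F i y)"
  define g where "g = (\<lambda>(i,j). (a i * a j) *\<^sub>R F (i+j) x)"
  define S1 where "S1 = (\<lambda>N::nat. {..<N} \<times> {..<N})"
  define S2 where "S2 = (\<lambda>N::nat. {(i,j). i+j < N})"
  have fin1: "finite (S1 N)" for N by (simp add: S1_def)
  have sub21: "S2 N \<subseteq> S1 N" for N by (auto simp: S1_def S2_def)
  have fin2: "finite (S2 N)" for N using fin1 sub21 by (rule finite_subset[rotated])
  have lin: "\<And>k. linear (F k)" using bl by (rule bounded_linear.linear)
  have Ulin: "U N y - U N z = U N (y - z)" for N y z
    by (simp add: U_def linear_diff[OF lin] scaleR_diff_right sum_subtractf)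
  have Unorm: "norm (U N y) \<le> suminf a * norm y" for N y
  proof -
    have "norm (U N y) \<le> (\<Sum>i<N. norm (a i *\<^sub>R F i y))" unfolding U_def by (rule norm_sum)
    also have "\<dots> \<le> (\<Sum>i<N. a i * norm y)"
      using a0 nrm by (intro sum_mono) (auto intro: mult_left_mono)
    also have "\<dots> = (\<Sum>i<N. a i) * norm y" by (simp add: sum_distrib_right)
    also have "\<dots> \<le> suminf a * norm y"
      using a0 sa by (intro mult_right_mono sum_le_suminf) auto
    finally show ?thesis .
  qed
  have PN: "U N (SN N) = sum g (S1 N)" for N
  proof -
    have "U N (SN N) = (\<Sum>i<N. \<Sum>j<N. (a i * a j) *\<^sub>R F (i+j) x)"
      by (simp add: U_def SN_def linear_sum[OF lin] linear_scale[OF lin] scaleR_sum_right comp)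
    also have "\<dots> = sum g (S1 N)"
      by (simp add: S1_def g_def sum.cartesian_product)
    finally show ?thesis .
  qed
  have QN: "(\<Sum>n<N. (\<Sum>i\<le>n. a i * a (n - i)) *\<^sub>R F n x) = sum g (S2 N)" for N
  proof -
    have "sum g (S2 N) = (\<Sum>n<N. \<Sum>i\<le>n. (a i * a (n - i)) *\<^sub>R F (i + (n - i)) x)"
      unfolding S2_def g_def by (rule sum.triangle_reindex)
    also have "\<dots> = (\<Sum>n<N. \<Sum>i\<le>n. (a i * a (n - i)) *\<^sub>R F n x)"
      by (intro sum.cong refl) auto
    also have "\<dots> = (\<Sum>n<N. (\<Sum>i\<le>n. a i * a (n - i)) *\<^sub>R F n x)"
      by (simp add: scaleR_sum_left)
    finally show ?thesis by simp
  qed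
  define h where "h = (\<lambda>(i,j). a i * a j)"
  have h1: "sum h (S1 N) = (\<Sum>i<N. a i) * (\<Sum>j<N. a j)" for N
    by (simp add: S1_def h_def sum_product sum.cartesian_product)
  have h2: "sum h (S2 N) = (\<Sum>n<N. \<Sum>i\<le>n. a i * a (n - i))" for N
    unfolding S2_def h_def by (rule sum.triangle_reindex)
  have lim1: "(\<lambda>N. sum h (S1 N)) \<longlonglongrightarrow> suminf a * suminf a"
    unfolding h1 by (intro tendsto_mult summable_LIMSEQ sa)
  have "(\<lambda>n. \<Sum>i\<le>n. a i * a (n - i)) sums (suminf a * suminf a)"
    using Cauchy_product_sums[of a a] sa a0 by simp
  then have lim2: "(\<lambda>N. sum h (S2 N)) \<longlonglongrightarrow> suminf a * suminf a"
    unfolding h2 sums_def .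
  have limdiff: "(\<lambda>N. (sum h (S1 N) - sum h (S2 N)) * norm x) \<longlonglongrightarrow> 0"
    using tendsto_mult_right[OF tendsto_diff[OF lim1 lim2], of "norm x"] by simp
  have PQ: "(\<lambda>N. sum g (S1 N) - sum g (S2 N)) \<longlonglongrightarrow> 0"
  proof (rule Lim_null_comparison[OF _ limdiff])
    show "\<forall>\<^sub>F N in sequentially. norm (sum g (S1 N) - sum g (S2 N)) \<le> (sum h (S1 N) - sum h (S2 N)) * norm x"
    proof (rule always_eventually, rule allI)
      fix N
      have "norm (sum g (S1 N) - sum g (S2 N)) = norm (sum g (S1 N - S2 N))"
        by (simp add: sum_diff fin1 sub21)
      also have "\<dots> \<le> (\<Sum>p\<in>S1 N - S2 N. norm (g p))" by (rule norm_sum)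
      also have "\<dots> \<le> (\<Sum>p\<in>S1 N - S2 N. h p * norm x)"
      proof (rule sum_mono)
        fix p assume "p \<in> S1 N - S2 N"
        obtain i j where p: "p = (i,j)" by (cases p)
        have "norm (g p) = (a i * a j) * norm (F (i+j) x)"
          using a0 by (simp add: p g_def abs_mult)
        also have "\<dots> \<le> (a i * a j) * norm x"
          using a0 nrm by (intro mult_left_mono) auto
        finally show "norm (g p) \<le> h p * norm x" by (simp add: p h_def)
      qed
      also have "\<dots> = (sum h (S1 N) - sum h (S2 N)) * norm x"
        by (simp add: sum_distrib_right[symmetric] sum_diff fin1 sub21)
      finally show "norm (sum g (S1 N) - sum g (S2 N)) \<le> (sum h (S1 N) - sum h (S2 N)) * norm x" .
    qed
  qed
  have SNlim: "SN \<longlonglongrightarrow> S"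
    unfolding SN_def S_def using summ[of x] by (simp add: summable_LIMSEQ)
  have ULim: "(\<lambda>N. U N S) \<longlonglongrightarrow> T"
    unfolding U_def T_def using summ[of S] by (simp add: summable_LIMSEQ)
  have Udiff: "(\<lambda>N. U N (SN N) - U N S) \<longlonglongrightarrow> 0"
  proof (rule Lim_null_comparison)
    show "\<forall>\<^sub>F N in sequentially. norm (U N (SN N) - U N S) \<le> suminf a * norm (SN N - S)"
      by (rule always_eventually) (simp add: Ulin Unorm)
    have "(\<lambda>N. SN N - S) \<longlonglongrightarrow> 0" using SNlim by (simp add: LIM_zero)
    then have "(\<lambda>N. norm (SN N - S)) \<longlonglongrightarrow> 0" by (simp add: tendsto_norm_zero)
    then show "(\<lambda>N. suminf a * norm (SN N - S)) \<longlonglongrightarrow> 0"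
      using tendsto_mult_left[of _ 0 sequentially "suminf a"] by simp
  qed
  have "(\<lambda>N. U N (SN N)) \<longlonglongrightarrow> T"
    using tendsto_add[OF Udiff ULim] by simp
  then have "(\<lambda>N. sum g (S1 N)) \<longlonglongrightarrow> T" by (simp add: PN)
  then have "(\<lambda>N. sum g (S1 N) - (sum g (S1 N) - sum g (S2 N))) \<longlonglongrightarrow> T - 0"
    by (intro tendsto_diff PQ)
  then have "(\<lambda>N. sum g (S2 N)) \<longlonglongrightarrow> T" by simp
  then show ?thesis unfolding sums_def QN T_def S_def .
qed


context chilbert
begin
subclass banach ..
end

lemma scaleR_scaleC_commute: "scaleR r (scaleC c y) = scaleC c (scaleR r (y::'a::complex_inner))"
  by (simp add: scaleR_scaleC scaleC_scaleC mult.commute)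

lemma cinner_scaleR_left: "cinner (scaleR r u) v = complex_of_real r * cinner u (v::'a::complex_inner)"
  by (simp add: scaleR_scaleC cinner_scaleC_left)

lemma cinner_scaleR_right: "cinner u (scaleR r v) = complex_of_real r * cinner u (v::'a::complex_inner)"
  by (simp add: scaleR_scaleC cinner_scaleC_right)

lemma bounded_linear_cinner_left: "bounded_linear (\<lambda>y::'a::complex_inner. cinner y x)"
proof -
  have 1: "\<And>a b. cinner (a + b) x = cinner a x + cinner b x" by (rule cinner_add_left)
  have 2: "\<And>r a. cinner (scaleR r a) x = scaleR r (cinner a x)"
    by (simp add: cinner_scaleR_left scaleR_conv_of_real)
  have 3: "\<And>a. norm (cinner a x) \<le> norm a * norm x"
    using cinner_cauchy_schwarz by metis
  show ?thesis by (rule bounded_linear_intro[OF 1 2 3])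
qed

lemma Im_cinner_right: "Im (cinner y x) = - inner y (scaleC \<i> x)"
proof -
  have "inner y (scaleC \<i> x) = Re (cinner y (scaleC \<i> x))" by (simp add: Re_cinner)
  also have "\<dots> = - Im (cinner y x)" by (simp add: cinner_scaleC_right)
  finally show ?thesis by simp
qed

locale psq =
  fixes A :: "'a::chilbert \<Rightarrow> 'a" and K :: real
  assumes bc: "bounded_clinear A" and pos: "positive_op A" and Kpos: "0 < K"
    and Kb: "\<And>x. norm (A x) \<le> norm x * K"
begin

definition B where "B x = x - (1/K) *\<^sub>R A x"
definition F where "F k = B ^^ k"
definition P where "P x = (\<Sum>k. sqc k *\<^sub>R F k x)"
definition R0 where "R0 x = x - P x"
definition R where "R x = sqrt K *\<^sub>R R0 x"

lemma A_herm: "cinner (A x) y = cinner x (A y)"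
  by (rule positive_herm[OF bc pos])

lemma B_bc: "bounded_clinear B"
proof -
  have "bounded_linear (\<lambda>x. x - (1/K) *\<^sub>R A x)"
    using bc unfolding bounded_clinear_def
    by (intro bounded_linear_sub bounded_linear_ident bounded_linear_compose[OF bounded_linear_scaleR_right]) auto
  moreover have "B (scaleC c x) = scaleC c (B x)" for c x
    by (simp add: B_def bounded_clinear_scaleC[OF bc] scaleR_scaleC_commute scaleC_diff_right)
  ultimately show ?thesis unfolding bounded_clinear_def B_def[abs_def] by auto
qed

lemma B_herm: "cinner (B x) y = cinner x (B y)"
  by (simp add: B_def cinner_diff_left cinner_diff_right cinner_scaleR_left cinner_scaleR_right A_herm)

lemma inner_A_le: "inner (A x) x \<le> K * (norm x)^2"
proof -
  have "inner (A x) x \<le> norm (A x) * norm x" by (rule norm_cauchy_schwarz)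
  also have "\<dots> \<le> (norm x * K) * norm x" by (intro mult_right_mono Kb) auto
  finally show ?thesis by (simp add: power2_eq_square mult.commute mult.left_commute)
qed

lemma B_pos: "positive_op B"
  unfolding positive_op_def
proof (intro allI conjI)
  fix x
  have e: "cinner (B x) x = cinner x x - complex_of_real (1/K) * cinner (A x) x"
    by (simp add: B_def cinner_diff_left cinner_scaleR_left)
  have iA: "Im (cinner (A x) x) = 0" using pos by (simp add: positive_op_def)
  show "Im (cinner (B x) x) = 0" using iA by (simp add: e Im_cinner_self)
  have "Re (cinner (B x) x) = (norm x)^2 - (1/K) * inner (A x) x"
    by (simp add: e cinner_self_norm Re_cinner)
  moreover have "(1/K) * inner (A x) x \<le> (norm x)^2"
    using inner_A_le[of x] Kpos by (simp add: field_simps)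
  ultimately show "Re (cinner (B x) x) \<ge> 0" by simp
qed

lemma B_le: "inner (B x) x \<le> (norm x)^2"
proof -
  have "inner (B x) x = (norm x)^2 - (1/K) * inner (A x) x"
    by (simp add: B_def inner_diff_left power2_norm_eq_inner)
  moreover have "0 \<le> inner (A x) x" by (rule positive_inner_nonneg[OF pos])
  ultimately show ?thesis using Kpos by simp
qed

lemma B_contr: "norm (B x) \<le> norm x"
  by (rule positive_contr[OF B_bc B_pos B_le])

lemma F_bc: "bounded_clinear (F k)"
  unfolding F_def by (rule bounded_clinear_funpow[OF B_bc])

lemma F_bl: "bounded_linear (F k)"
  using F_bc by (simp add: bounded_clinear_def)

lemma F_contr: "norm (F k x) \<le> norm x"
  unfolding F_def by (rule contr_funpow[OF B_contr])

lemma F_comp: "F j (F k y) = F (j + k) y"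
  by (simp add: F_def funpow_add)

lemma F_herm: "cinner (F k x) y = cinner x (F k y)"
  unfolding F_def by (rule herm_funpow[OF B_herm])

lemma F1: "F 1 = B" by (simp add: F_def)
lemma F_Suc0: "F (Suc 0) = B" by (simp add: F_def)

lemma summ: "summable (\<lambda>k. sqc k *\<^sub>R F k y)"
proof (rule summable_comparison_test)
  show "\<exists>N. \<forall>n\<ge>N. norm (sqc n *\<^sub>R F n y) \<le> sqc n * norm y"
    using sqc_nonneg F_contr by (auto intro!: mult_left_mono)
  show "summable (\<lambda>n. sqc n * norm y)" using sqc_summable by (rule summable_mult2)
qed

lemma P_bl: "bounded_linear P"
proof -
  have 1: "P (x + y) = P x + P y" for x y
    unfolding P_def
    by (simp add: linear_add[OF bounded_linear.linear[OF F_bl]] scaleR_add_right suminf_add[OF summ summ])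
  have 2: "P (scaleR r x) = scaleR r (P x)" for r x
  proof -
    have "P (scaleR r x) = (\<Sum>k. r *\<^sub>R (sqc k *\<^sub>R F k x))"
      unfolding P_def by (simp add: linear_scale[OF bounded_linear.linear[OF F_bl]] mult.commute)
    also have "\<dots> = r *\<^sub>R P x"
      unfolding P_def by (rule bounded_linear.suminf[OF bounded_linear_scaleR_right summ, symmetric])
    finally show ?thesis .
  qed
  have 3: "norm (P x) \<le> norm x * 1" for x
  proof -
    have "norm (P x) \<le> (\<Sum>k. sqc k * norm x)"
      unfolding P_def
    proof (rule norm_suminf_le[OF _ summable_mult2[OF sqc_summable]])
      fix n
      show "norm (sqc n *\<^sub>R F n x) \<le> sqc n * norm x"
        using mult_left_mono[OF F_contr sqc_nonneg] by (simp add: abs_of_nonneg[OF sqc_nonneg])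
    qed
    also have "\<dots> = suminf sqc * norm x" by (rule suminf_mult2[OF sqc_summable, symmetric])
    also have "\<dots> \<le> 1 * norm x" by (intro mult_right_mono sqc_suminf_le) auto
    finally show ?thesis by simp
  qed
  show ?thesis by (rule bounded_linear_intro[OF 1 2 3])
qed

lemma P_scaleC: "P (scaleC c x) = scaleC c (P x)"
proof -
  have "P (scaleC c x) = (\<Sum>k. scaleC c (sqc k *\<^sub>R F k x))"
    unfolding P_def by (simp add: bounded_clinear_scaleC[OF F_bc] scaleR_scaleC_commute)
  also have "\<dots> = scaleC c (P x)"
    unfolding P_def by (rule bounded_linear.suminf[OF bounded_linear_scaleC summ, symmetric])
  finally show ?thesis .
qed

lemma P_sums: "(\<lambda>k. sqc k *\<^sub>R F k x) sums P x"
  unfolding P_def by (rule summable_sums[OF summ])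

lemma PP: "P (P x) = 2 *\<^sub>R P x - B x"
proof -
  have s1: "(\<lambda>n. sqd n *\<^sub>R F n x) sums P (P x)"
    using op_cauchy[OF F_bl F_contr F_comp sqc_nonneg sqc_summable, of x]
    by (simp add: sqd_def P_def)
  have "(\<lambda>n. 2 *\<^sub>R (sqc n *\<^sub>R F n x) - (if n = 1 then F n x else 0)) sums (2 *\<^sub>R P x - F 1 x)"
    by (intro sums_diff sums_scaleR_right P_sums sums_single)
  moreover have "(\<lambda>n. 2 *\<^sub>R (sqc n *\<^sub>R F n x) - (if n = 1 then F n x else 0)) = (\<lambda>n. sqd n *\<^sub>R F n x)"
    by (rule ext) (simp add: sqd_eq scaleR_diff_left)
  ultimately have "(\<lambda>n. sqd n *\<^sub>R F n x) sums (2 *\<^sub>R P x - B x)" by (simp add: F1 F_Suc0)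
  with s1 show ?thesis by (rule sums_unique2)
qed

lemma R0R0: "R0 (R0 x) = (1/K) *\<^sub>R A x"
proof -
  have "R0 (R0 x) = x - P x - P (x - P x)" by (simp add: R0_def)
  also have "\<dots> = x - P x - (P x - P (P x))" by (simp add: linear_diff[OF bounded_linear.linear[OF P_bl]])
  also have "\<dots> = (1/K) *\<^sub>R A x" by (simp add: PP B_def scaleR_2 algebra_simps)
  finally show ?thesis .
qed

lemma R0_bc: "bounded_clinear R0"
proof -
  have "bounded_linear R0" unfolding R0_def[abs_def]
    by (intro bounded_linear_sub bounded_linear_ident P_bl)
  moreover have "R0 (scaleC c x) = scaleC c (R0 x)" for c x
    by (simp add: R0_def P_scaleC scaleC_diff_right)
  ultimately show ?thesis by (simp add: bounded_clinear_def)
qed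

lemma R_bc: "bounded_clinear R"
proof -
  have "bounded_linear R" unfolding R_def[abs_def]
    using R0_bc unfolding bounded_clinear_def
    by (intro bounded_linear_compose[OF bounded_linear_scaleR_right]) auto
  moreover have "R (scaleC c x) = scaleC c (R x)" for c x
    by (simp add: R_def bounded_clinear_scaleC[OF R0_bc] scaleR_scaleC_commute)
  ultimately show ?thesis by (simp add: bounded_clinear_def)
qed

lemma RR: "R (R x) = A x"
proof -
  have "R (R x) = sqrt K *\<^sub>R (sqrt K *\<^sub>R R0 (R0 x))"
    by (simp add: R_def bclin_scaleR[OF R0_bc])
  also have "\<dots> = A x" using Kpos by (simp add: R0R0)
  finally show ?thesis .
qed

lemma cinner_P: "(\<lambda>k. sqc k *\<^sub>R inner (F k x) y) sums inner (P x) y"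
proof -
  have "(\<lambda>k. inner (sqc k *\<^sub>R F k x) y) sums inner (P x) y"
    by (rule bounded_linear.sums[OF bounded_linear_inner_left P_sums])
  then show ?thesis by simp
qed

lemma R0_pos: "positive_op R0"
  unfolding positive_op_def
proof (intro allI conjI)
  fix x
  have e: "cinner (R0 x) x = cinner x x - cinner (P x) x" by (simp add: R0_def cinner_diff_left)
  have z: "inner (F k x) (scaleC \<i> x) = 0" for k
  proof -
    have "Im (cinner (F k x) x) = 0"
      using F_herm[of k x x] cinner_commute[of x "F k x"] by (metis cnj.simps(2) neg_equal_zero)
    then show ?thesis using Im_cinner_right[of "F k x" x] by simp
  qed
  have "(\<lambda>k. 0) sums inner (P x) (scaleC \<i> x)"
    using cinner_P[of x "scaleC \<i> x"] by (simp add: z)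
  then have "inner (P x) (scaleC \<i> x) = 0" using sums_zero sums_unique2 by blast
  then have imP: "Im (cinner (P x) x) = 0" by (simp add: Im_cinner_right)

  show "Im (cinner (R0 x) x) = 0" using imP by (simp add: e Im_cinner_self)
  have "inner (P x) x = (\<Sum>k. sqc k * inner (F k x) x)"
    using cinner_P[of x x] by (simp add: sums_iff)
  also have "\<dots> \<le> (\<Sum>k. sqc k * (norm x)^2)"
  proof (rule suminf_le)
    show "sqc k * inner (F k x) x \<le> sqc k * (norm x)^2" for k
    proof (rule mult_left_mono[OF _ sqc_nonneg])
      have "inner (F k x) x \<le> norm (F k x) * norm x" by (rule norm_cauchy_schwarz)
      also have "\<dots> \<le> norm x * norm x" by (intro mult_right_mono F_contr) auto
      finally show "inner (F k x) x \<le> (norm x)^2" by (simp add: power2_eq_square)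
    qed
    show "summable (\<lambda>k. sqc k * inner (F k x) x)"
      using cinner_P[of x x] by (simp add: sums_iff)
    show "summable (\<lambda>k. sqc k * (norm x)^2)" by (rule summable_mult2[OF sqc_summable])
  qed
  also have "\<dots> = suminf sqc * (norm x)^2" by (rule suminf_mult2[OF sqc_summable, symmetric])
  also have "\<dots> \<le> 1 * (norm x)^2" by (intro mult_right_mono sqc_suminf_le) auto
  finally have "inner (P x) x \<le> (norm x)^2" by simp
  then show "Re (cinner (R0 x) x) \<ge> 0"
    by (simp add: e cinner_self_norm Re_cinner)
qed

lemma R_pos: "positive_op R"
  using R0_pos Kpos unfolding positive_op_def
  by (simp add: R_def cinner_scaleR_left)

lemma commute_P:
  assumes bc': "bounded_clinear Q" and cA: "\<And>x. Q (A x) = A (Q x)"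
  shows "Q (P x) = P (Q x)"
proof -
  have cB: "Q (B x) = B (Q x)" for x
    by (simp add: B_def bclin_diff[OF bc'] bclin_scaleR[OF bc'] cA)
  have cF: "Q (F k x) = F k (Q x)" for k x
  proof (induction k arbitrary: x)
    case 0 then show ?case by (simp add: F_def)
  next
    case (Suc k)
    have "Q (F (Suc k) x) = Q (B (F k x))" by (simp add: F_def)
    also have "\<dots> = B (Q (F k x))" by (rule cB)
    also have "\<dots> = B (F k (Q x))" by (simp add: Suc)
    also have "\<dots> = F (Suc k) (Q x)" by (simp add: F_def)
    finally show ?case .
  qed
  have "Q (P x) = (\<Sum>k. Q (sqc k *\<^sub>R F k x))"
    unfolding P_def by (rule bounded_linear.suminf[OF bounded_clinear_bl[OF bc'] summ])
  also have "\<dots> = P (Q x)"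
    unfolding P_def by (simp add: bclin_scaleR[OF bc'] cF)
  finally show ?thesis .
qed

lemma R_unique:
  assumes bc': "bounded_clinear R'" and pos': "positive_op R'" and sq': "\<And>x. R' (R' x) = A x"
  shows "R' = R"
proof
  fix x
  have cA: "R' (A x) = A (R' x)" for x by (metis sq')
  have cR: "R' (R x) = R (R' x)" for x
    by (simp add: R_def R0_def bclin_scaleR[OF bc'] bclin_diff[OF bc'] commute_P[OF bc' cA])
  define y where "y = R x - R' x"
  have "R y + R' y = 0"
    by (simp add: y_def bclin_diff[OF R_bc] bclin_diff[OF bc'] RR sq' cR)
  then have "cinner (R y) y + cinner (R' y) y = 0" by (metis cinner_add_left cinner_zero_left)
  then have "inner (R y) y + inner (R' y) y = 0" by (metis Re_cinner plus_complex.sel(1) zero_complex.sel(1))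
  moreover have "0 \<le> inner (R y) y" by (rule positive_inner_nonneg[OF R_pos])
  moreover have "0 \<le> inner (R' y) y" by (rule positive_inner_nonneg[OF pos'])
  ultimately have z1: "inner (R y) y = 0" and z2: "inner (R' y) y = 0" by linarith+
  have Ry: "R y = 0" by (rule positive_zero[OF R_bc R_pos z1])
  have R'y: "R' y = 0" by (rule positive_zero[OF bc' pos' z2])
  have "cinner y y = cinner x (R y) - cinner x (R' y)"
    by (simp add: y_def cinner_diff_left positive_herm[OF R_bc R_pos] positive_herm[OF bc' pos'])
  then have "cinner y y = 0" by (simp add: Ry R'y)
  then have "y = 0" by (simp add: cinner_self_norm)
  then show "R' x = R x" by (simp add: y_def)
qed

end

lemma op_sqrt_props:
  fixes A :: "'a::chilbert \<Rightarrow> 'a"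
  assumes bc: "bounded_clinear A" and pos: "positive_op A"
  shows "bounded_clinear (op_sqrt A) \<and> positive_op (op_sqrt A) \<and> (\<forall>x. op_sqrt A (op_sqrt A x) = A x)"
proof -
  obtain K where K: "0 < K" "\<And>x. norm (A x) \<le> norm x * K"
    using bounded_linear.pos_bounded[OF bounded_clinear_bl[OF bc]] by blast
  interpret psq A K using bc pos K by unfold_locales auto
  have "op_sqrt A = R"
    unfolding op_sqrt_def
  proof (rule the_equality)
    show "bounded_clinear R \<and> positive_op R \<and> (\<forall>x. R (R x) = A x)"
      using R_bc R_pos RR by blast
    fix R' assume "bounded_clinear R' \<and> positive_op R' \<and> (\<forall>x. R' (R' x) = A x)"
    then show "R' = R" using R_unique by blast
  qed
  then show ?thesis using R_bc R_pos RR by simp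
qed


lemma ubp:
  fixes f :: "'i \<Rightarrow> 'a::banach \<Rightarrow> real" and I :: "'i set"
  assumes bl: "\<And>i. i \<in> I \<Longrightarrow> bounded_linear (f i)"
    and pw: "\<And>y. \<exists>M. \<forall>i\<in>I. \<bar>f i y\<bar> \<le> M"
  shows "\<exists>C. \<forall>i\<in>I. \<forall>y. \<bar>f i y\<bar> \<le> C * norm y"
proof -
  define E where "E n = {y. \<forall>i\<in>I. \<bar>f i y\<bar> \<le> real n}" for n :: nat
  have clE: "closed (E n)" for n
  proof -
    have "E n = (\<Inter>i\<in>I. {y. \<bar>f i y\<bar> \<le> real n})" by (auto simp: E_def)
    moreover have "closed {y. \<bar>f i y\<bar> \<le> real n}" if "i \<in> I" for i
    proof -
      have c1: "continuous_on UNIV (f i)" by (rule linear_continuous_on[OF bl[OF that]])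
      show ?thesis by (intro closed_Collect_le continuous_intros c1)
    qed
    ultimately show ?thesis by (auto intro: closed_INT)
  qed
  have cover: "\<Union>(range E) = UNIV"
  proof -
    have "y \<in> \<Union>(range E)" for y
    proof -
      obtain M where M: "\<forall>i\<in>I. \<bar>f i y\<bar> \<le> M" using pw by blast
      obtain n :: nat where "M \<le> real n" using real_arch_simple by blast
      then have "y \<in> E n" using M by (auto simp: E_def)
      then show ?thesis by blast
    qed
    then show ?thesis by blast
  qed
  have "\<exists>n. interior (E n) \<noteq> {}"
  proof (rule ccontr)
    assume "\<not> (\<exists>n. interior (E n) \<noteq> {})"
    then have emp: "\<And>n. interior (E n) = {}" by blast
    have "euclidean interior_of \<Union>(range E) = {}"
    proof (rule Baire_category_alt)
      show "completely_metrizable_space (euclidean :: 'a topology) \<or>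
            locally_compact_space (euclidean :: 'a topology) \<and> regular_space (euclidean :: 'a topology)"
        using completely_metrizable_space_euclidean by blast
      show "countable (range E)" by simp
      show "closedin euclidean T \<and> euclidean interior_of T = {}" if "T \<in> range E" for T
        using that clE emp by auto
    qed
    then show False using cover by simp
  qed
  then obtain n y0 where y0: "y0 \<in> interior (E n)" by blast
  then obtain r where r: "0 < r" "ball y0 r \<subseteq> interior (E n)"
    using open_contains_ball open_interior by blast
  have y0E: "y0 \<in> E n" using y0 interior_subset by blast
  have small: "\<bar>f i u\<bar> \<le> 2 * real n" if iI: "i \<in> I" and u: "norm u < r" for i u
  proof -
    have "y0 + u \<in> ball y0 r" using u by (simp add: dist_norm)
    then have "y0 + u \<in> E n" using r(2) interior_subset by blast
    then have a: "\<bar>f i (y0 + u)\<bar> \<le> real n" using iI by (simp add: E_def)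
    have b: "\<bar>f i y0\<bar> \<le> real n" using y0E iI by (simp add: E_def)
    have "f i u = f i (y0 + u) - f i y0" by (simp add: linear_add[OF bounded_linear.linear[OF bl[OF iI]]])
    then show ?thesis using a b by linarith
  qed
  have "\<forall>i\<in>I. \<forall>y. \<bar>f i y\<bar> \<le> (4 * real n / r) * norm y"
  proof (intro ballI allI)
    fix i y assume iI: "i \<in> I"
    interpret fi: bounded_linear "f i" by (rule bl[OF iI])
    show "\<bar>f i y\<bar> \<le> (4 * real n / r) * norm y"
    proof (cases "y = 0")
      case True then show ?thesis by (simp add: fi.zero)
    next
      case False
      then have ny: "0 < norm y" by simp
      define u where "u = (r / (2 * norm y)) *\<^sub>R y"
      have nu: "norm u = r / 2" using ny r(1) by (simp add: u_def)
      then have "norm u < r" using r(1) by simp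
      then have fu: "\<bar>f i u\<bar> \<le> 2 * real n" by (rule small[OF iI])
      have "f i u = (r / (2 * norm y)) * f i y" by (simp add: u_def fi.scaleR)
      then have "f i y = (2 * norm y / r) * f i u"
        using ny r(1) by (simp add: field_simps)
      then have "\<bar>f i y\<bar> = (2 * norm y / r) * \<bar>f i u\<bar>"
        using ny r(1) by (simp add: abs_mult)
      also have "\<dots> \<le> (2 * norm y / r) * (2 * real n)"
        using fu ny r(1) by (intro mult_left_mono) auto
      also have "\<dots> = (4 * real n / r) * norm y" by (simp add: field_simps)
      finally show ?thesis .
    qed
  qed
  then show ?thesis by blast
qed

lemma op_sqrt_facts:
  fixes A :: "'a::chilbert \<Rightarrow> 'a"
  assumes bc: "bounded_clinear A" and pos: "positive_op A"
  shows "bounded_clinear (op_sqrt A)" "positive_op (op_sqrt A)" "op_sqrt A (op_sqrt A x) = A x"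
    "cinner (op_sqrt A x) y = cinner x (op_sqrt A y)"
  using op_sqrt_props[OF bc pos] positive_herm by blast+

lemma A_norm_sqrt:
  fixes A :: "'a::chilbert \<Rightarrow> 'a"
  assumes bc: "bounded_clinear A" and pos: "positive_op A"
  shows "A_norm A x = norm (op_sqrt A x)"
proof -
  have "cinner (A x) x = cinner (op_sqrt A x) (op_sqrt A x)"
    by (metis op_sqrt_facts(3,4)[OF bc pos])
  then have "Re (cinner (A x) x) = (norm (op_sqrt A x))^2"
    by (simp add: cinner_self_norm)
  then show ?thesis by (simp add: A_norm_def)
qed

lemma B_half_bound:
  fixes A X :: "'a::chilbert \<Rightarrow> 'a"
  assumes bc: "bounded_clinear A" and pos: "positive_op A" and X: "X \<in> B_half A"
  shows "\<exists>c. \<forall>w. norm (op_sqrt A (X w)) \<le> c * norm (op_sqrt A w)"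
proof -
  let ?R = "op_sqrt A"
  note Rf = op_sqrt_facts[OF bc pos]
  have Xbc: "bounded_clinear X" using X by (simp add: B_half_def)
  have "\<forall>y. \<exists>z. adjoint_op X (?R y) = ?R z"
    using X unfolding B_half_def by blast
  then obtain z where z: "\<And>y. adjoint_op X (?R y) = ?R (z y)" by metis
  have key: "cinner (?R (X w)) y = cinner (?R w) (z y)" for w y
  proof -
    have "cinner (?R (X w)) y = cinner (X w) (?R y)" by (rule Rf(4))
    also have "\<dots> = cinner w (adjoint_op X (?R y))" by (rule adjoint_op_eq[OF Xbc])
    also have "\<dots> = cinner w (?R (z y))" by (simp add: z)
    also have "\<dots> = cinner (?R w) (z y)" by (simp add: Rf(4))
    finally show ?thesis .
  qed
  define I where "I = {w. norm (?R w) \<le> 1}"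
  have "\<exists>C. \<forall>w\<in>I. \<forall>y. \<bar>inner (?R (X w)) y\<bar> \<le> C * norm y"
  proof (rule ubp)
    show "bounded_linear (\<lambda>y. inner (?R (X w)) y)" for w by (rule bounded_linear_inner_right)
    show "\<exists>M. \<forall>w\<in>I. \<bar>inner (?R (X w)) y\<bar> \<le> M" for y
    proof (intro exI ballI)
      fix w assume w: "w \<in> I"
      have "\<bar>inner (?R (X w)) y\<bar> = \<bar>Re (cinner (?R (X w)) y)\<bar>" by (simp add: Re_cinner)
      also have "\<dots> \<le> cmod (cinner (?R (X w)) y)" by (rule abs_Re_le_cmod)
      also have "\<dots> = cmod (cinner (?R w) (z y))" by (simp add: key)
      also have "\<dots> \<le> norm (?R w) * norm (z y)" by (rule cinner_cauchy_schwarz)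
      also have "\<dots> \<le> 1 * norm (z y)" using w by (intro mult_right_mono) (auto simp: I_def)
      finally show "\<bar>inner (?R (X w)) y\<bar> \<le> norm (z y)" by simp
    qed
  qed
  then obtain C where C: "\<And>w y. w \<in> I \<Longrightarrow> \<bar>inner (?R (X w)) y\<bar> \<le> C * norm y" by blast
  define C' where "C' = max C 0"
  have C'0: "0 \<le> C'" by (simp add: C'_def)
  have bI: "norm (?R (X w)) \<le> C'" if w: "w \<in> I" for w
  proof (cases "?R (X w) = 0")
    case True then show ?thesis using C'0 by simp
  next
    case False
    have "(norm (?R (X w)))^2 = \<bar>inner (?R (X w)) (?R (X w))\<bar>" by (simp add: power2_norm_eq_inner)
    also have "\<dots> \<le> C * norm (?R (X w))" by (rule C[OF w])
    also have "\<dots> \<le> C' * norm (?R (X w))" by (intro mult_right_mono) (auto simp: C'_def)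
    finally have "norm (?R (X w)) * norm (?R (X w)) \<le> C' * norm (?R (X w))"
      by (simp add: power2_eq_square)
    then show ?thesis using False by simp
  qed
  have lin: "?R (X (t *\<^sub>R w)) = t *\<^sub>R ?R (X w)" for t w
    by (simp add: bclin_scaleR[OF Xbc] bclin_scaleR[OF Rf(1)])
  have linR: "?R (t *\<^sub>R w) = t *\<^sub>R ?R w" for t w
    by (simp add: bclin_scaleR[OF Rf(1)])
  have "norm (?R (X w)) \<le> C' * norm (?R w)" for w
  proof (cases "?R w = 0")
    case False
    define t where "t = 1 / norm (?R w)"
    have tpos: "0 < t" using False by (simp add: t_def)
    have "norm (?R (t *\<^sub>R w)) = 1" using False by (simp add: linR t_def)
    then have "t *\<^sub>R w \<in> I" by (simp add: I_def)
    then have "norm (?R (X (t *\<^sub>R w))) \<le> C'" by (rule bI)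
    then have "t * norm (?R (X w)) \<le> C'" using tpos by (simp add: lin)
    then show ?thesis using False by (simp add: t_def field_simps)
  next
    case True
    show ?thesis
    proof (rule ccontr)
      assume "\<not> ?thesis"
      then have pos: "0 < norm (?R (X w))" using True by simp
      define t where "t = (C' + 1) / norm (?R (X w))"
      have "norm (?R (t *\<^sub>R w)) = 0" using True by (simp add: linR)
      then have "t *\<^sub>R w \<in> I" by (simp add: I_def)
      then have "norm (?R (X (t *\<^sub>R w))) \<le> C'" by (rule bI)
      moreover have "norm (?R (X (t *\<^sub>R w))) = C' + 1"
        using pos C'0 by (simp add: lin t_def)
      ultimately show False by simp
    qed
  qed
  then show ?thesis by blast
qed


lemma closure_closed_under:
  assumes "continuous_on UNIV f" "f ` S \<subseteq> closure S"
  shows "f ` closure S \<subseteq> closure S"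
  by (rule image_closure_subset[OF continuous_on_subset[OF assms(1) subset_UNIV] closed_closure assms(2)])

lemma closure_subspace_props:
  fixes S :: "'a::chilbert set"
  assumes add: "\<And>x y. x \<in> S \<Longrightarrow> y \<in> S \<Longrightarrow> x + y \<in> S"
    and sc: "\<And>c x. x \<in> S \<Longrightarrow> scaleC c x \<in> S" and z: "0 \<in> S"
  shows "subspace (closure S)" "\<And>c x. x \<in> closure S \<Longrightarrow> scaleC c x \<in> closure S"
proof -
  have scC: "scaleC c x \<in> closure S" if "x \<in> closure S" for c x
  proof -
    have "scaleC c ` closure S \<subseteq> closure S"
      by (rule closure_closed_under)
         (auto intro: linear_continuous_on bounded_linear_scaleC sc closure_subset[THEN subsetD])
    then show ?thesis using that by blast
  qed
  then show "\<And>c x. x \<in> closure S \<Longrightarrow> scaleC c x \<in> closure S" by blast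
  have addC: "x + y \<in> closure S" if x: "x \<in> closure S" and y: "y \<in> closure S" for x y
  proof -
    have 1: "z + y' \<in> closure S" if "z \<in> closure S" "y' \<in> S" for z y'
    proof -
      have "(\<lambda>z. z + y') ` closure S \<subseteq> closure S"
        by (rule closure_closed_under)
           (auto intro!: continuous_intros add that(2) closure_subset[THEN subsetD])
      then show ?thesis using that(1) by blast
    qed
    have "(\<lambda>y. x + y) ` closure S \<subseteq> closure S"
      by (rule closure_closed_under) (auto intro!: continuous_intros 1 x)
    then show ?thesis using y by blast
  qed
  show "subspace (closure S)"
    unfolding subspace_def
  proof (intro conjI ballI allI)
    show "0 \<in> closure S" using z closure_subset by blast
    show "x + y \<in> closure S" if "x \<in> closure S" "y \<in> closure S" for x y using addC that .
    show "r *\<^sub>R x \<in> closure S" if "x \<in> closure S" for r x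
      using scC[OF that, of "complex_of_real r"] by (simp add: scaleC_of_real)
  qed
qed

locale aset =
  fixes A :: "'a::chilbert \<Rightarrow> 'a"
  assumes bc: "bounded_clinear A" and pos: "positive_op A" and nz: "A \<noteq> (\<lambda>x. 0)"
begin

definition R where "R = op_sqrt A"
definition N where "N x = A_norm A x"
definition M where "M = closure (range A)"
definition Abdd where "Abdd X \<longleftrightarrow> bounded_clinear X \<and> (\<exists>c. \<forall>w. norm (R (X w)) \<le> c * norm (R w))"
definition opn where "opn X = A_opnorm A X"

lemma Rf1: "bounded_clinear R" unfolding R_def by (rule op_sqrt_facts(1)[OF bc pos])
lemma Rf2: "positive_op R" unfolding R_def by (rule op_sqrt_facts(2)[OF bc pos])
lemma Rf3: "R (R x) = A x" unfolding R_def by (rule op_sqrt_facts(3)[OF bc pos])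
lemma Rf4: "cinner (R x) y = cinner x (R y)" unfolding R_def by (rule op_sqrt_facts(4)[OF bc pos])
lemmas Rf = Rf1 Rf2 Rf3 Rf4

lemma N_eq: "N x = norm (R x)"
  unfolding N_def R_def by (rule A_norm_sqrt[OF bc pos])

lemma A_herm: "cinner (A x) y = cinner x (A y)"
  by (rule positive_herm[OF bc pos])

lemma rangeA_add: "x \<in> range A \<Longrightarrow> y \<in> range A \<Longrightarrow> x + y \<in> range A"
proof -
  assume "x \<in> range A" "y \<in> range A"
  then obtain a b where ab: "x = A a" "y = A b" by blast
  then have "x + y = A (a + b)" by (simp add: bclin_add[OF bc])
  then show "x + y \<in> range A" by blast
qed

lemma rangeA_sc: "x \<in> range A \<Longrightarrow> scaleC c x \<in> range A"
proof -
  assume "x \<in> range A"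
  then obtain a where a: "x = A a" by blast
  then have "scaleC c x = A (scaleC c a)" by (simp add: bounded_clinear_scaleC[OF bc])
  then show "scaleC c x \<in> range A" by blast
qed

lemma rangeA_0: "0 \<in> range A"
proof -
  have "0 = A 0" by (simp add: bclin_zero[OF bc])
  then show ?thesis by blast
qed

lemma M_sub: "subspace M"
  unfolding M_def by (rule closure_subspace_props(1)[OF rangeA_add rangeA_sc rangeA_0])

lemma M_sc: "x \<in> M \<Longrightarrow> scaleC c x \<in> M"
  unfolding M_def by (rule closure_subspace_props(2)[OF rangeA_add rangeA_sc rangeA_0])

lemma M_closed: "closed M" unfolding M_def by (rule closed_closure)

lemma A_in_M: "A x \<in> M"
  unfolding M_def by (rule closure_subset[THEN subsetD]) (rule rangeI)

lemmas M_props = M_sub M_closed M_sc A_in_M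

lemma R_zero_iff: "R k = 0 \<longleftrightarrow> A k = 0"
proof
  assume "R k = 0" then show "A k = 0" using Rf(3)[of k] bclin_zero[OF Rf(1)] by simp
next
  assume "A k = 0"
  then have "cinner (A k) k = 0" by simp
  moreover have "cinner (R k) (R k) = cinner (R (R k)) k" by (simp add: Rf(4))
  ultimately have "cinner (R k) (R k) = 0" by (simp add: Rf(3))
  then show "R k = 0" by (simp add: cinner_self_norm)
qed

lemma decomp: "\<exists>p\<in>M. R (u - p) = 0"
proof -
  obtain p where pM: "p \<in> M" and orth: "\<And>m. m \<in> M \<Longrightarrow> cinner (u - p) m = 0"
    using proj_exists_c[OF M_props(2) M_props(1) M_props(3), of u] by blast
  have "cinner (A (u - p)) v = 0" for v
    using orth[OF M_props(4)[of v]] by (simp add: A_herm)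
  then have "A (u - p) = 0" by (intro cinner_ext) simp
  then show ?thesis using pM R_zero_iff by blast
qed

lemma Abdd_B_half: "X \<in> B_half A \<Longrightarrow> Abdd X"
  unfolding Abdd_def R_def using B_half_bound[OF bc pos] by (auto simp: B_half_def)

lemma Abdd_id: "Abdd (\<lambda>x. x)"
  unfolding Abdd_def bounded_clinear_def by (auto intro: bounded_linear_ident exI[of _ 1])

lemma Abdd_comp: assumes "Abdd X" "Abdd Y" shows "Abdd (\<lambda>x. X (Y x))"
proof -
  obtain c where c: "\<And>w. norm (R (X w)) \<le> c * norm (R w)" using assms(1) by (auto simp: Abdd_def)
  obtain d where d: "\<And>w. norm (R (Y w)) \<le> d * norm (R w)" using assms(2) by (auto simp: Abdd_def)
  have c0: "0 \<le> c"
  proof (rule ccontr)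
    assume "\<not> 0 \<le> c"
    then have "c < 0" by simp
    obtain v where "A v \<noteq> 0" using nz by auto
    then have "R v \<noteq> 0" using R_zero_iff by blast
    then have "0 < norm (R v)" by simp
    then have "c * norm (R v) < 0" using \<open>c < 0\<close> by (simp add: mult_neg_pos)
    then show False using c[of v] norm_ge_zero[of "R (X v)"] by linarith
  qed
  have "norm (R (X (Y w))) \<le> (c * d) * norm (R w)" for w
  proof -
    have "norm (R (X (Y w))) \<le> c * norm (R (Y w))" by (rule c)
    also have "\<dots> \<le> c * (d * norm (R w))" by (intro mult_left_mono d c0)
    finally show ?thesis by (simp add: mult.assoc)
  qed
  moreover have "bounded_clinear (\<lambda>x. X (Y x))"
    using assms unfolding Abdd_def bounded_clinear_def
    by (auto intro: bounded_linear_compose)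
  ultimately show ?thesis unfolding Abdd_def by blast
qed

lemma Abdd_pow: assumes "Abdd X" shows "Abdd (X ^^ n)"
proof (induction n)
  case 0 then show ?case using Abdd_id by (simp add: id_def)
next
  case (Suc n)
  have "Abdd (\<lambda>x. X ((X ^^ n) x))" by (rule Abdd_comp[OF assms Suc])
  then show ?case by (simp add: comp_def)
qed

lemma exists_unit: "\<exists>x0\<in>M. N x0 = 1"
proof -
  obtain v where v: "A v \<noteq> 0" using nz by auto
  have "R (A v) \<noteq> 0"
  proof
    assume "R (A v) = 0"
    then have "A (A v) = 0" using R_zero_iff by blast
    then have "cinner (A v) (A v) = 0" by (simp add: A_herm)
    then show False using v by (simp add: cinner_self_norm)
  qed
  then have np: "0 < N (A v)" by (simp add: N_eq)
  define x0 where "x0 = (1 / N (A v)) *\<^sub>R A v"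
  have "x0 \<in> M" unfolding x0_def by (rule subspace_scale[OF M_props(1) M_props(4)])
  moreover have "N x0 = 1" using np
    by (simp add: x0_def N_eq bclin_scaleR[OF Rf(1)])
  ultimately show ?thesis by blast
qed

definition USet where "USet X = {N (X x) | x. x \<in> M \<and> N x = 1}"

lemma opn_def2: "opn X = Sup (USet X)"
  by (simp add: opn_def A_opnorm_def USet_def N_def M_def)

lemma USet_ne: "USet X \<noteq> {}"
  using exists_unit by (auto simp: USet_def)

lemma USet_bdd: assumes "Abdd X" shows "bdd_above (USet X)"
proof -
  obtain c where c: "\<And>w. norm (R (X w)) \<le> c * norm (R w)" using assms by (auto simp: Abdd_def)
  show ?thesis
    by (rule bdd_aboveI[of _ c]) (auto simp: USet_def N_eq intro: order_trans[OF c])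
qed

lemma opn_ge0: assumes "Abdd X" shows "0 \<le> opn X"
proof -
  obtain x0 where "x0 \<in> M" "N x0 = 1" using exists_unit by blast
  then have "N (X x0) \<in> USet X" by (auto simp: USet_def)
  then have "N (X x0) \<le> opn X" unfolding opn_def2 by (rule cSup_upper[OF _ USet_bdd[OF assms]])
  moreover have "0 \<le> N (X x0)" by (simp add: N_eq)
  ultimately show ?thesis by linarith
qed

lemma opn_bound: assumes X: "Abdd X" shows "N (X u) \<le> opn X * N u"
proof -
  obtain c where c: "\<And>w. norm (R (X w)) \<le> c * norm (R w)" using X by (auto simp: Abdd_def)
  have Xbc: "bounded_clinear X" using X by (simp add: Abdd_def)
  obtain p where pM: "p \<in> M" and k: "R (u - p) = 0" using decomp by blast
  have RXk: "R (X (u - p)) = 0"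
    using c[of "u - p"] k by simp
  have Nu: "N u = N p"
    using k by (simp add: N_eq bclin_diff[OF Rf(1)])
  have NXu: "N (X u) = N (X p)"
    using RXk by (simp add: N_eq bclin_diff[OF Rf(1)] bclin_diff[OF Xbc])
  show ?thesis
  proof (cases "N p = 0")
    case True
    then have "N (X p) = 0" using c[of p] by (simp add: N_eq)
    then show ?thesis using NXu Nu True by simp
  next
    case False
    then have np: "0 < N p" by (simp add: N_eq)
    define p' where "p' = (1 / N p) *\<^sub>R p"
    have "p' \<in> M" unfolding p'_def by (rule subspace_scale[OF M_props(1) pM])
    moreover have "N p' = 1" using np by (simp add: p'_def N_eq bclin_scaleR[OF Rf(1)])
    ultimately have "N (X p') \<in> USet X" by (auto simp: USet_def)
    then have "N (X p') \<le> opn X" unfolding opn_def2 by (rule cSup_upper[OF _ USet_bdd[OF X]])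
    moreover have "N (X p') = N (X p) / N p"
      using np by (simp add: p'_def N_eq bclin_scaleR[OF Rf(1)] bclin_scaleR[OF Xbc] divide_inverse mult.commute)
    ultimately have "N (X p) / N p \<le> opn X" by simp
    then have "N (X p) \<le> opn X * N p" using np by (simp add: divide_le_eq)
    then show ?thesis using NXu Nu by simp
  qed
qed

lemma opn_le: assumes "\<And>u. N (X u) \<le> c * N u" shows "opn X \<le> c"
  unfolding opn_def2
proof (rule cSup_least[OF USet_ne])
  fix y assume "y \<in> USet X"
  then obtain x where "y = N (X x)" "N x = 1" by (auto simp: USet_def)
  then show "y \<le> c" using assms[of x] by simp
qed

lemma opn_submult:
  assumes X: "Abdd X" and Y: "Abdd Y"
  shows "opn (\<lambda>x. X (Y x)) \<le> opn X * opn Y"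
proof (rule opn_le)
  fix u
  have "N (X (Y u)) \<le> opn X * N (Y u)" by (rule opn_bound[OF X])
  also have "\<dots> \<le> opn X * (opn Y * N u)" by (intro mult_left_mono opn_bound[OF Y] opn_ge0[OF X])
  finally show "N (X (Y u)) \<le> (opn X * opn Y) * N u" by (simp add: mult.assoc)
qed

lemma opn_pow_submult:
  assumes X: "Abdd X"
  shows "opn (X ^^ (m + n)) \<le> opn (X ^^ m) * opn (X ^^ n)"
proof -
  have "X ^^ (m + n) = (\<lambda>x. (X ^^ m) ((X ^^ n) x))" by (simp add: funpow_add comp_def)
  then show ?thesis using opn_submult[OF Abdd_pow[OF X] Abdd_pow[OF X]] by simp
qed

lemma ker_inv: assumes X: "Abdd X" and k: "A k = 0" shows "A (X k) = 0"
proof -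
  obtain c where c: "\<And>w. norm (R (X w)) \<le> c * norm (R w)" using X by (auto simp: Abdd_def)
  have "R k = 0" using k R_zero_iff by blast
  then have "R (X k) = 0" using c[of k] by simp
  then show ?thesis using R_zero_iff by blast
qed

lemma N_congr: assumes "A z = A x" shows "N z = N x"
proof -
  have "cinner (A z) z = cinner z (A z)" by (rule A_herm)
  also have "\<dots> = cinner z (A x)" using assms by simp
  also have "\<dots> = cinner (A z) x" by (rule A_herm[symmetric])
  also have "\<dots> = cinner (A x) x" using assms by simp
  finally have "cinner (A z) z = cinner (A x) x" .
  then show ?thesis by (simp add: N_def A_norm_def)
qed

lemma inv_one:
  assumes T: "Abdd T" and S: "Abdd S" and TS: "\<And>x. A (T (S x)) = A x"
  shows "1 \<le> opn (T ^^ n) * opn (S ^^ n)"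
proof -
  have Tbc: "bounded_clinear T" using T by (simp add: Abdd_def)
  have kerT: "A ((T ^^ j) k) = 0" if "A k = 0" for j k
    using ker_inv[OF Abdd_pow[OF T] that] .
  have TnSn: "A ((T ^^ n) ((S ^^ n) x)) = A x" for x
  proof (induction n)
    case 0 then show ?case by simp
  next
    case (Suc n)
    let ?y = "(S ^^ n) x"
    have Tnbc: "bounded_clinear (T ^^ n)" using Abdd_pow[OF T] by (simp add: Abdd_def)
    have "A (T (S ?y) - ?y) = 0" by (simp add: bclin_diff[OF bc] TS)
    then have "A ((T ^^ n) (T (S ?y) - ?y)) = 0" by (rule kerT)
    then have "A ((T ^^ n) (T (S ?y))) = A ((T ^^ n) ?y)"
      by (simp add: bclin_diff[OF Tnbc] bclin_diff[OF bc])
    moreover have "(T ^^ Suc n) ((S ^^ Suc n) x) = (T ^^ n) (T (S ?y))"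
    proof -
      have "(T ^^ Suc n) z = (T ^^ n) (T z)" for z by (simp add: funpow_swap1)
      moreover have "(S ^^ Suc n) x = S ?y" by simp
      ultimately show ?thesis by simp
    qed
    ultimately show ?case using Suc by simp
  qed
  obtain x0 where x0: "x0 \<in> M" "N x0 = 1" using exists_unit by blast
  have "1 = N ((T ^^ n) ((S ^^ n) x0))" using N_congr[OF TnSn[of x0]] x0 by simp
  also have "\<dots> \<le> opn (T ^^ n) * N ((S ^^ n) x0)" by (rule opn_bound[OF Abdd_pow[OF T]])
  also have "\<dots> \<le> opn (T ^^ n) * (opn (S ^^ n) * N x0)"
    by (intro mult_left_mono opn_bound[OF Abdd_pow[OF S]] opn_ge0[OF Abdd_pow[OF T]])
  finally show ?thesis using x0 by simp
qed

end


lemma subadd_iter: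
  fixes l :: "nat \<Rightarrow> real"
  assumes sub: "\<And>m n. l (m + n) \<le> l m + l n"
  shows "l (q * m + r) \<le> real q * l m + l r"
proof (induction q)
  case 0 then show ?case by simp
next
  case (Suc q)
  have "l (Suc q * m + r) = l (m + (q * m + r))" by (simp add: add.assoc)
  also have "\<dots> \<le> l m + l (q * m + r)" by (rule sub)
  also have "\<dots> \<le> l m + (real q * l m + l r)" using Suc by simp
  finally show ?case by (simp add: algebra_simps)
qed

lemma fekete:
  fixes l :: "nat \<Rightarrow> real"
  assumes sub: "\<And>m n. l (m + n) \<le> l m + l n"
    and lb: "\<And>n. 1 \<le> n \<Longrightarrow> L0 \<le> l n / real n"
  shows "(\<lambda>n. l n / real n) \<longlonglongrightarrow> Inf {l n / real n | n. 1 \<le> n}"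
proof -
  define V where "V = {l n / real n | n. 1 \<le> n}"
  define L where "L = Inf V"
  have Vne: "V \<noteq> {}" by (auto simp: V_def)
  have Vbdd: "bdd_below V" by (rule bdd_belowI[of _ L0]) (auto simp: V_def intro: lb)
  have lower: "L \<le> l n / real n" if "1 \<le> n" for n
    unfolding L_def by (rule cInf_lower[OF _ Vbdd]) (use that in \<open>auto simp: V_def\<close>)
  show ?thesis unfolding V_def[symmetric] L_def[symmetric]
  proof (rule LIMSEQ_I)
    fix \<epsilon> :: real assume ep: "0 < \<epsilon>"
    have "Inf V < L + \<epsilon>/2" using ep by (simp add: L_def)
    then obtain v where "v \<in> V" "v < L + \<epsilon>/2" using cInf_lessD[OF Vne] by blast
    then obtain m where m1: "1 \<le> m" and lm: "l m / real m < L + \<epsilon>/2" by (auto simp: V_def)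
    define C where "C = (\<Sum>r<m. \<bar>l r\<bar>)"
    have Cb: "\<bar>l r\<bar> \<le> C" if "r < m" for r
      unfolding C_def using that by (intro member_le_sum) auto
    define D where "D = C + \<bar>l m\<bar>"
    have D0: "0 \<le> D" using Cb[of 0] m1 by (simp add: D_def)
    obtain no :: nat where no: "2 * D / \<epsilon> < real no" using reals_Archimedean2 by blast
    show "\<exists>no. \<forall>n\<ge>no. norm (l n / real n - L) < \<epsilon>"
    proof (intro exI allI impI)
      fix n assume nno: "max 1 no \<le> n"
      then have n1: "1 \<le> n" and nn: "2 * D / \<epsilon> < real n" using no by auto
      have npos: "0 < real n" using n1 by simp
      define q where "q = n div m"
      define r where "r = n mod m"
      have nqr: "n = q * m + r" by (simp add: q_def r_def)
      have rm: "r < m" using m1 by (simp add: r_def)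
      have "l n \<le> real q * l m + l r" using subadd_iter[OF sub, of q m r] nqr by simp
      also have "\<dots> \<le> real q * l m + C" using Cb[OF rm] by simp
      finally have ln1: "l n \<le> real q * l m + C" .
      have rl: "- \<bar>l m\<bar> \<le> real r * l m / real m"
      proof -
        have "\<bar>real r * l m / real m\<bar> = (real r / real m) * \<bar>l m\<bar>"
          by (simp add: abs_mult)
        also have "\<dots> \<le> 1 * \<bar>l m\<bar>" using rm m1 by (intro mult_right_mono) auto
        finally show ?thesis by linarith
      qed
      have "real n * l m / real m = real q * l m + real r * l m / real m"
        using m1 nqr by (simp add: field_simps)
      then have "l n \<le> real n * (l m / real m) + D"
        using ln1 rl by (simp add: D_def) 
      then have key: "l n / real n \<le> l m / real m + D / real n"
        using npos by (simp add: field_simps)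
      have "D / real n < \<epsilon> / 2"
        using nn ep npos D0 by (simp add: field_simps)
      then have "l n / real n < L + \<epsilon>" using key lm by linarith
      moreover have "L \<le> l n / real n" by (rule lower[OF n1])
      ultimately show "norm (l n / real n - L) < \<epsilon>" by simp
    qed
  qed
qed

lemma radius_limit:
  fixes a b :: "nat \<Rightarrow> real"
  assumes apos: "\<And>n. 0 < a n" and bpos: "\<And>n. 0 < b n"
    and asub: "\<And>m n. a (m + n) \<le> a m * a n"
    and bsub: "\<And>m n. b (m + n) \<le> b m * b n"
    and ab: "\<And>n. 1 \<le> a n * b n"
  shows "\<exists>L. (\<lambda>n. a n powr (1 / real n)) \<longlonglongrightarrow> L"
proof -
  define l where "l n = ln (a n)" for n
  have sub: "l (m + n) \<le> l m + l n" for m n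
  proof -
    have "ln (a (m + n)) \<le> ln (a m * a n)" using asub[of m n] apos by (simp add: mult_pos_pos)
    moreover have "ln (a m * a n) = ln (a m) + ln (a n)" using apos[of m] apos[of n] by (simp add: ln_mult)
    ultimately show ?thesis by (simp add: l_def)
  qed
  have bpow: "b (Suc k) \<le> b 1 ^ Suc k" for k
  proof (induction k)
    case 0 then show ?case by simp
  next
    case (Suc k)
    have "b (Suc (Suc k)) = b (1 + Suc k)" by simp
    also have "\<dots> \<le> b 1 * b (Suc k)" by (rule bsub)
    also have "\<dots> \<le> b 1 * b 1 ^ Suc k" using Suc bpos[of 1] by (intro mult_left_mono) auto
    finally show ?case by simp
  qed
  have lb: "- ln (b 1) \<le> l n / real n" if n1: "1 \<le> n" for n
  proof -
    obtain k where k: "n = Suc k" using n1 by (cases n) auto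
    have "1 / b n \<le> a n" using ab[of n] bpos[of n] by (simp add: field_simps)
    then have "ln (1 / b n) \<le> ln (a n)" using apos bpos by simp
    moreover have "ln (1 / b n) = - ln (b n)" using bpos[of n] by (simp add: ln_div)
    ultimately have "- ln (b n) \<le> l n" by (simp add: l_def)
    moreover have "ln (b n) \<le> real n * ln (b 1)"
    proof -
      have "ln (b n) \<le> ln (b 1 ^ n)" using bpow[of k] k bpos by simp
      also have "\<dots> = real n * ln (b 1)" using bpos by (simp add: ln_realpow)
      finally show ?thesis .
    qed
    ultimately have "- (real n * ln (b 1)) \<le> l n" by linarith
    then show ?thesis using n1 by (simp add: field_simps)
  qed
  have "(\<lambda>n. l n / real n) \<longlonglongrightarrow> Inf {l n / real n | n. 1 \<le> n}"
    by (rule fekete[OF sub lb])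
  then have "(\<lambda>n. exp (l n / real n)) \<longlonglongrightarrow> exp (Inf {l n / real n | n. 1 \<le> n})"
    by (rule tendsto_exp)
  moreover have "a n powr (1 / real n) = exp (l n / real n)" for n
    using apos[of n] by (simp add: powr_def l_def)
  ultimately show ?thesis by auto
qed

theorem mainTheorem12:
  fixes A T S :: "'a::chilbert \<Rightarrow> 'a"
  assumes "bounded_clinear A"
    and "positive_op A"
    and "A \<noteq> (\<lambda>x. 0)"
    and "A_inverse A T S"
  shows "A_spectral_radius A T * A_spectral_radius A S \<ge> 1"
proof -
  interpret aset A using assms(1-3) by unfold_locales
  have TB: "T \<in> B_half A" and SB: "S \<in> B_half A" and TS: "\<And>x. A (T (S x)) = A x"
    and ST: "\<And>x. A (S (T x)) = A x"
    using assms(4) by (auto simp: A_inverse_def)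
  have T: "Abdd T" by (rule Abdd_B_half[OF TB])
  have S: "Abdd S" by (rule Abdd_B_half[OF SB])
  define a where "a n = opn (T ^^ n)" for n
  define b where "b n = opn (S ^^ n)" for n
  have ab: "1 \<le> a n * b n" for n unfolding a_def b_def by (rule inv_one[OF T S TS])
  have ba: "1 \<le> b n * a n" for n using ab[of n] by (simp add: mult.commute)
  have a0: "0 \<le> a n" for n unfolding a_def by (rule opn_ge0[OF Abdd_pow[OF T]])
  have b0: "0 \<le> b n" for n unfolding b_def by (rule opn_ge0[OF Abdd_pow[OF S]])
  have apos: "0 < a n" for n
  proof (rule ccontr)
    assume "\<not> 0 < a n" then have "a n = 0" using a0[of n] by simp
    then show False using ab[of n] by simp
  qed
  have bpos: "0 < b n" for n
  proof (rule ccontr)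
    assume "\<not> 0 < b n" then have "b n = 0" using b0[of n] by simp
    then show False using ab[of n] by simp
  qed
  have asub: "a (m + n) \<le> a m * a n" for m n unfolding a_def by (rule opn_pow_submult[OF T])
  have bsub: "b (m + n) \<le> b m * b n" for m n unfolding b_def by (rule opn_pow_submult[OF S])
  obtain LT where LT: "(\<lambda>n. a n powr (1 / real n)) \<longlonglongrightarrow> LT"
    using radius_limit[OF apos bpos asub bsub ab] by blast
  obtain LS where LS: "(\<lambda>n. b n powr (1 / real n)) \<longlonglongrightarrow> LS"
    using radius_limit[OF bpos apos bsub asub ba] by blast
  have rT: "A_spectral_radius A T = LT"
    unfolding A_spectral_radius_def using LT by (simp add: a_def opn_def limI)
  have rS: "A_spectral_radius A S = LS"
    unfolding A_spectral_radius_def using LS by (simp add: b_def opn_def limI)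
  have prod: "(\<lambda>n. a n powr (1 / real n) * b n powr (1 / real n)) \<longlonglongrightarrow> LT * LS"
    by (rule tendsto_mult[OF LT LS])
  have "1 \<le> a n powr (1 / real n) * b n powr (1 / real n)" for n
  proof -
    have "a n powr (1 / real n) * b n powr (1 / real n) = (a n * b n) powr (1 / real n)"
      using a0 b0 by (simp add: powr_mult)
    also have "1 \<le> \<dots>" by (rule ge_one_powr_ge_zero[OF ab]) simp
    finally show ?thesis .
  qed
  then have "1 \<le> LT * LS"
    by (intro LIMSEQ_le_const[OF prod]) auto
  then show ?thesis by (simp add: rT rS)
qed


end
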